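(* Let $d\ge 1$ and let $G_A=(V_A,E_A)$, $G_B=(V_B,E_B)$ be graphs that are universally rigid in $\mathbb{R}^d$. Let $\mathbf{p}^A$, $\mathbf{p}^B$ be configurations in general position in $\mathbb{R}^d$ of $G_A$, $G_B$, with $V_C=V_A\cap V_B$ a proper subset of both $V_A$ and $V_B$, $|V_C|\ge d+1$, and $\mathbf{p}^A_i=\mathbf{p}^B_i$ for $i\in V_C$. If both $G_A(\mathbf{p}^A)$ and $G_B(\mathbf{p}^B)$ have positive semidefinite stress matrices of nullity $d+1$, then their edge-reduced framework attachment (the framework with graph $(V_A\cup V_B,(E_A\cup E_B)\setminus F)$, where $F$ is the set of edges of $E_B\setminus E_A$ with both endpoints in $V_C$, and configuration $\mathbf{p}$ with $\mathbf{p}_i=\mathbf{p}^A_i$ for $i\in V_A$, $\mathbf{p}_i=\mathbf{p}^B_i$ for $i\in V_B$) also has a positive semidefinite stress matrix of nullity $d+1$.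
   Context: A framework $G(\mathbf{p})$ in $\mathbb{R}^d$ is a finite graph $G=(V,E)$ with points $\mathbf{p}_i\in\mathbb{R}^d$; general position means any $d+1$ distinct vertices have affinely independent points. $G(\mathbf{p})$ is universally rigid if for every $d'\ge d$, every configuration $\mathbf{q}$ in $\mathbb{R}^{d'}$ with $\|\mathbf{q}_i-\mathbf{q}_j\|=\|\mathbf{p}_i-\mathbf{p}_j\|$ for all edges satisfies the same equality for all pairs of vertices. A graph is universally rigid in $\mathbb{R}^d$ if every framework of it in general position in $\mathbb{R}^d$ is universally rigid. A stress matrix of $G(\mathbf{p})$ is a real $|V|\times|V|$ matrix $\Omega$ with: $\Omega_{ij}=\Omega_{ji}$; $\Omega_{ij}=0$ whenever $i\ne j$, $\{i,j\}\notin E$; $\sum_j\Omega_{ij}=0$ and $\sum_j\Omega_{ij}\mathbf{p}_j=0$ for all $i$. Nullity means $\dim\ker$. *)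

theory Defs
  imports Complex_Main
begin

text \<open>A point of R^d is a function
nat => real of which only the coordinates 0..d-1 are used; a configuration is
p :: 'v => nat => real.\<close>

definition graph :: "'v set \<Rightarrow> 'v set set \<Rightarrow> bool" where
  "graph V E \<longleftrightarrow> finite V \<and> (\<forall>e\<in>E. e \<subseteq> V \<and> card e = 2)"

definition sqdist :: "nat \<Rightarrow> ('v \<Rightarrow> nat \<Rightarrow> real) \<Rightarrow> 'v \<Rightarrow> 'v \<Rightarrow> real" where
  "sqdist d p i j = (\<Sum>k<d. (p i k - p j k)^2)"

definition aff_indep :: "nat \<Rightarrow> ('v \<Rightarrow> nat \<Rightarrow> real) \<Rightarrow> 'v set \<Rightarrow> bool" where
  "aff_indep d p S \<longleftrightarrow>
     (\<forall>c :: 'v \<Rightarrow> real. (\<Sum>i\<in>S. c i) = 0 \<and> (\<forall>k<d. (\<Sum>i\<in>S. c i * p i k) = 0)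
        \<longrightarrow> (\<forall>i\<in>S. c i = 0))"

definition general_position :: "nat \<Rightarrow> 'v set \<Rightarrow> ('v \<Rightarrow> nat \<Rightarrow> real) \<Rightarrow> bool" where
  "general_position d V p \<longleftrightarrow>
     (\<forall>S. S \<subseteq> V \<and> card S = d + 1 \<longrightarrow> aff_indep d p S)"

definition univ_rigid_framework ::
  "nat \<Rightarrow> 'v set \<Rightarrow> 'v set set \<Rightarrow> ('v \<Rightarrow> nat \<Rightarrow> real) \<Rightarrow> bool" where
  "univ_rigid_framework d V E p \<longleftrightarrow>
     (\<forall>d' \<ge> d. \<forall>q :: 'v \<Rightarrow> nat \<Rightarrow> real.
        (\<forall>i\<in>V. \<forall>j\<in>V. {i, j} \<in> E \<longrightarrow> sqdist d' q i j = sqdist d p i j)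
        \<longrightarrow> (\<forall>i\<in>V. \<forall>j\<in>V. sqdist d' q i j = sqdist d p i j))"

definition univ_rigid_graph :: "nat \<Rightarrow> 'v set \<Rightarrow> 'v set set \<Rightarrow> bool" where
  "univ_rigid_graph d V E \<longleftrightarrow>
     (\<forall>p. general_position d V p \<longrightarrow> univ_rigid_framework d V E p)"

text \<open>A |V| x |V| matrix is represented as a function 'v => 'v => real, only
its entries on V x V being relevant.\<close>
definition stress_matrix ::
  "nat \<Rightarrow> 'v set \<Rightarrow> 'v set set \<Rightarrow> ('v \<Rightarrow> nat \<Rightarrow> real) \<Rightarrow> ('v \<Rightarrow> 'v \<Rightarrow> real) \<Rightarrow> bool" where
  "stress_matrix d V E p \<Omega> \<longleftrightarrow>
     (\<forall>i\<in>V. \<forall>j\<in>V. \<Omega> i j = \<Omega> j i) \<and>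
     (\<forall>i\<in>V. \<forall>j\<in>V. i \<noteq> j \<and> {i, j} \<notin> E \<longrightarrow> \<Omega> i j = 0) \<and>
     (\<forall>i\<in>V. (\<Sum>j\<in>V. \<Omega> i j) = 0) \<and>
     (\<forall>i\<in>V. \<forall>k<d. (\<Sum>j\<in>V. \<Omega> i j * p j k) = 0)"

definition psd :: "'v set \<Rightarrow> ('v \<Rightarrow> 'v \<Rightarrow> real) \<Rightarrow> bool" where
  "psd V \<Omega> \<longleftrightarrow> (\<forall>x :: 'v \<Rightarrow> real. (\<Sum>i\<in>V. \<Sum>j\<in>V. x i * \<Omega> i j * x j) \<ge> 0)"

definition matrix_kernel :: "'v set \<Rightarrow> ('v \<Rightarrow> 'v \<Rightarrow> real) \<Rightarrow> ('v \<Rightarrow> real) set" where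
  "matrix_kernel V \<Omega> =
     {x. (\<forall>i. i \<notin> V \<longrightarrow> x i = 0) \<and> (\<forall>i\<in>V. (\<Sum>j\<in>V. \<Omega> i j * x j) = 0)}"

definition lin_indep_fun :: "('v \<Rightarrow> real) set \<Rightarrow> bool" where
  "lin_indep_fun B \<longleftrightarrow>
     (\<forall>c :: ('v \<Rightarrow> real) \<Rightarrow> real. (\<forall>i. (\<Sum>b\<in>B. c b * b i) = 0) \<longrightarrow> (\<forall>b\<in>B. c b = 0))"

definition has_nullity :: "'v set \<Rightarrow> ('v \<Rightarrow> 'v \<Rightarrow> real) \<Rightarrow> nat \<Rightarrow> bool" where
  "has_nullity V \<Omega> n \<longleftrightarrow>
     (\<exists>B. finite B \<and> card B = n \<and> B \<subseteq> matrix_kernel V \<Omega> \<and> lin_indep_fun B \<and>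
          (\<forall>x\<in>matrix_kernel V \<Omega>. \<exists>c. x = (\<lambda>i. \<Sum>b\<in>B. c b * b i)))"

definition has_psd_stress_nullity ::
  "nat \<Rightarrow> 'v set \<Rightarrow> 'v set set \<Rightarrow> ('v \<Rightarrow> nat \<Rightarrow> real) \<Rightarrow> nat \<Rightarrow> bool" where
  "has_psd_stress_nullity d V E p n \<longleftrightarrow>
     (\<exists>\<Omega>. stress_matrix d V E p \<Omega> \<and> psd V \<Omega> \<and> has_nullity V \<Omega> n)"

end

theory Submission
  imports Defs "HOL-Library.Function_Algebras"
begin


definition ip :: "'a set \<Rightarrow> ('a \<Rightarrow> real) \<Rightarrow> ('a \<Rightarrow> real) \<Rightarrow> real" where
  "ip N x y = (\<Sum>n\<in>N. x n * y n)"

lemma ip_comm: "ip N x y = ip N y x"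
  unfolding ip_def by (simp add: mult.commute)

lemma ip_cong: "(\<And>n. n \<in> N \<Longrightarrow> x n = x' n) \<Longrightarrow> (\<And>n. n \<in> N \<Longrightarrow> y n = y' n) \<Longrightarrow> ip N x y = ip N x' y'"
  unfolding ip_def by (rule sum.cong) auto

lemma ip_diff_left: "ip N (\<lambda>n. a n - b n) c = ip N a c - ip N b c"
  unfolding ip_def by (simp add: algebra_simps sum_subtractf)

lemma ip_add_left: "ip N (\<lambda>n. a n + b n) c = ip N a c + ip N b c"
  unfolding ip_def by (simp add: algebra_simps sum.distrib)

lemma ip_scale_left: "ip N (\<lambda>n. t * a n) c = t * ip N a c"
  unfolding ip_def by (simp add: algebra_simps sum_distrib_left)

lemma ip_sum_right: "ip N x (\<lambda>n. \<Sum>e\<in>E. c e * r e n) = (\<Sum>e\<in>E. c e * ip N x (r e))"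
  unfolding ip_def by (simp add: sum_distrib_left sum_distrib_right mult_ac sum.swap[of _ N E])

lemma ip_sum_left: "ip N (\<lambda>n. \<Sum>e\<in>E. c e * r e n) x = (\<Sum>e\<in>E. c e * ip N (r e) x)"
  using ip_sum_right[of N x c r E] by (simp add: ip_comm)

lemma ip_self_zero: "finite N \<Longrightarrow> ip N x x = 0 \<Longrightarrow> n \<in> N \<Longrightarrow> x n = 0"
  unfolding ip_def
  by (subst (asm) sum_nonneg_eq_0_iff) auto

lemma proj_exists:
  assumes "finite N" "finite E"
  shows "\<exists>lm. \<forall>e\<in>E. ip N (\<lambda>n. w n - (\<Sum>e'\<in>E. lm e' * r e' n)) (r e) = 0"
  using assms(2)
proof (induction E arbitrary: w rule: finite_induct)
  case empty
  then show ?case by simp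
next
  case (insert e0 E)
  obtain lm where l: "\<forall>e\<in>E. ip N (\<lambda>n. w n - (\<Sum>e'\<in>E. lm e' * r e' n)) (r e) = 0"
    using insert.IH by blast
  obtain mu where m: "\<forall>e\<in>E. ip N (\<lambda>n. r e0 n - (\<Sum>e'\<in>E. mu e' * r e' n)) (r e) = 0"
    using insert.IH by blast
  define z where "z = (\<lambda>n. w n - (\<Sum>e'\<in>E. lm e' * r e' n))"
  define y where "y = (\<lambda>n. r e0 n - (\<Sum>e'\<in>E. mu e' * r e' n))"
  have zE: "\<forall>e\<in>E. ip N z (r e) = 0" using l z_def by simp
  have yE: "\<forall>e\<in>E. ip N y (r e) = 0" using m y_def by simp
  have re0: "r e0 n = y n + (\<Sum>e'\<in>E. mu e' * r e' n)" for n unfolding y_def by simp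
  have ipre0: "ip N u (r e0) = ip N u y + (\<Sum>e\<in>E. mu e * ip N u (r e))" for u
  proof -
    have "ip N u (r e0) = ip N u (\<lambda>n. y n + (\<Sum>e'\<in>E. mu e' * r e' n))"
      by (subst re0[abs_def]) simp
    also have "\<dots> = ip N u y + ip N u (\<lambda>n. \<Sum>e'\<in>E. mu e' * r e' n)"
      using ip_add_left[of N y "\<lambda>n. \<Sum>e'\<in>E. mu e' * r e' n" u] by (simp add: ip_comm)
    finally show ?thesis by (simp add: ip_sum_right)
  qed
  show ?case
  proof (cases "ip N y y = 0")
    case True
    have y0: "\<And>n. n \<in> N \<Longrightarrow> y n = 0" using ip_self_zero[OF assms(1) True] by blast
    define lm' where "lm' = lm(e0 := 0)"
    have s: "(\<Sum>e'\<in>insert e0 E. lm' e' * r e' n) = (\<Sum>e'\<in>E. lm e' * r e' n)" for n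
      using insert.hyps by (auto simp add: lm'_def intro!: sum.cong)
    have "\<forall>e\<in>insert e0 E. ip N z (r e) = 0"
    proof
      fix e assume "e \<in> insert e0 E"
      then show "ip N z (r e) = 0"
      proof
        assume "e = e0"
        have "ip N z y = 0" unfolding ip_def using y0 by simp
        then show ?thesis using ipre0[of z] zE `e = e0` by simp
      qed (use zE in auto)
    qed
    then show ?thesis using s unfolding z_def by (intro exI[of _ lm']) simp
  next
    case False
    define t where "t = ip N z y / ip N y y"
    define lm' where "lm' = (\<lambda>e. lm e - t * mu e)(e0 := t)"
    have s: "w n - (\<Sum>e'\<in>insert e0 E. lm' e' * r e' n) = z n - t * y n" for n
    proof -
      have "(\<Sum>e'\<in>insert e0 E. lm' e' * r e' n) = t * r e0 n + (\<Sum>e'\<in>E. (lm e' - t * mu e') * r e' n)"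
        using insert.hyps by (auto simp add: lm'_def intro!: sum.cong)
      also have "\<dots> = t * r e0 n + (\<Sum>e'\<in>E. lm e' * r e' n) - t * (\<Sum>e'\<in>E. mu e' * r e' n)"
        by (simp add: algebra_simps sum_subtractf sum_distrib_left)
      finally show ?thesis unfolding z_def y_def by (simp add: algebra_simps)
    qed
    have ortho: "ip N (\<lambda>n. z n - t * y n) (r e) = 0" if "e \<in> insert e0 E" for e
    proof -
      have base: "ip N (\<lambda>n. z n - t * y n) (r e') = 0" if "e' \<in> E" for e'
        using zE yE that by (simp add: ip_diff_left ip_scale_left)
      have yy: "ip N (\<lambda>n. z n - t * y n) y = 0"
        by (simp only: ip_diff_left ip_scale_left) (simp add: t_def False)
      show ?thesis using that
      proof
        assume "e = e0"
        then show ?thesis using ipre0[of "\<lambda>n. z n - t * y n"] base yy by simp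
      qed (use base in auto)
    qed
    show ?thesis
      by (intro exI[of _ lm']) (simp add: s ortho)
  qed
qed

lemma duality:
  assumes "finite N" "finite E"
    and h: "\<And>x. (\<forall>e\<in>E. ip N (r e) x = 0) \<Longrightarrow> ip N w x = 0"
  shows "\<exists>lm. \<forall>n\<in>N. w n = (\<Sum>e\<in>E. lm e * r e n)"
proof -
  obtain lm where l: "\<forall>e\<in>E. ip N (\<lambda>n. w n - (\<Sum>e'\<in>E. lm e' * r e' n)) (r e) = 0"
    using proj_exists[OF assms(1,2)] by blast
  define z where "z = (\<lambda>n. w n - (\<Sum>e'\<in>E. lm e' * r e' n))"
  have "\<forall>e\<in>E. ip N (r e) z = 0" using l by (simp add: z_def ip_comm)
  then have wz: "ip N w z = 0" using h by blast
  have sz: "ip N (\<lambda>n. \<Sum>e'\<in>E. lm e' * r e' n) z = 0"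
    using `\<forall>e\<in>E. ip N (r e) z = 0` by (simp add: ip_sum_left)
  have "ip N z z = 0"
    using wz sz by (subst (1) z_def) (simp add: ip_diff_left)
  then have "\<forall>n\<in>N. z n = 0" using ip_self_zero[OF assms(1)] by blast
  then show ?thesis unfolding z_def by auto
qed



definition mv :: "'a set \<Rightarrow> ('a \<Rightarrow> 'a \<Rightarrow> real) \<Rightarrow> ('a \<Rightarrow> real) \<Rightarrow> 'a \<Rightarrow> real" where
  "mv V A x = (\<lambda>i. \<Sum>j\<in>V. A i j * x j)"

definition bil :: "'a set \<Rightarrow> ('a \<Rightarrow> 'a \<Rightarrow> real) \<Rightarrow> ('a \<Rightarrow> real) \<Rightarrow> ('a \<Rightarrow> real) \<Rightarrow> real" where
  "bil V A x y = (\<Sum>i\<in>V. \<Sum>j\<in>V. x i * A i j * y j)"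

definition symm :: "'a set \<Rightarrow> ('a \<Rightarrow> 'a \<Rightarrow> real) \<Rightarrow> bool" where
  "symm V A \<longleftrightarrow> (\<forall>i\<in>V. \<forall>j\<in>V. A i j = A j i)"

lemma psd_bil: "psd V A \<longleftrightarrow> (\<forall>x. bil V A x x \<ge> 0)"
  unfolding psd_def bil_def by simp

lemma bil_ip: "bil V A x y = ip V x (mv V A y)"
  unfolding bil_def ip_def mv_def by (simp add: sum_distrib_left mult_ac)

lemma bil_sym: "symm V A \<Longrightarrow> bil V A x y = bil V A y x"
  unfolding bil_def symm_def
  by (subst sum.swap) (auto intro!: sum.cong simp: mult_ac)

lemma bil_add_left: "bil V A (\<lambda>i. x i + y i) z = bil V A x z + bil V A y z"
  unfolding bil_def by (simp add: algebra_simps sum.distrib)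

lemma bil_add_right: "bil V A z (\<lambda>i. x i + y i) = bil V A z x + bil V A z y"
  unfolding bil_def by (simp add: algebra_simps sum.distrib)

lemma bil_scale_left: "bil V A (\<lambda>i. t * x i) z = t * bil V A x z"
  unfolding bil_def by (simp add: algebra_simps sum_distrib_left)

lemma bil_scale_right: "bil V A z (\<lambda>i. t * x i) = t * bil V A z x"
  unfolding bil_def by (simp add: algebra_simps sum_distrib_left)

lemma bil_cong: "(\<And>i. i \<in> V \<Longrightarrow> x i = x' i) \<Longrightarrow> (\<And>i. i \<in> V \<Longrightarrow> y i = y' i) \<Longrightarrow> bil V A x y = bil V A x' y'"
  unfolding bil_def by (auto intro!: sum.cong)

lemma disc:
  fixes a b c :: real
  assumes "\<And>t. a + 2*b*t + c*t^2 \<ge> 0" "c \<ge> 0"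
  shows "b^2 \<le> a * c"
proof (cases "c = 0")
  case True
  have "b = 0"
  proof (rule ccontr)
    assume "b \<noteq> 0"
    have "a + 2*b*(-(a+1)/(2*b)) + c*(-(a+1)/(2*b))^2 \<ge> 0" by (rule assms(1))
    with `b \<noteq> 0` True show False by (simp add: field_simps)
  qed
  then show ?thesis using True by simp
next
  case False
  then have cp: "c > 0" using assms(2) by simp
  have "a + 2*b*(-b/c) + c*(-b/c)^2 \<ge> 0" by (rule assms(1))
  then have "a - b^2/c \<ge> 0" using cp by (simp add: field_simps power2_eq_square)
  then have "b^2 / c \<le> a" by simp
  then show ?thesis using cp by (simp add: field_simps mult.commute)
qed

lemma cauchy_schwarz_psd:
  assumes "psd V A" "symm V A"
  shows "(bil V A x y)^2 \<le> bil V A x x * bil V A y y"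
proof -
  have "bil V A x y ^2 \<le> bil V A x x * bil V A y y"
  proof (rule disc)
    fix t
    have "0 \<le> bil V A (\<lambda>i. x i + t * y i) (\<lambda>i. x i + t * y i)"
      using assms(1) by (simp add: psd_bil)
    also have "\<dots> = bil V A x x + 2 * bil V A x y * t + bil V A y y * t^2"
      using bil_sym[OF assms(2), of y x]
      by (simp add: bil_add_left bil_add_right bil_scale_left bil_scale_right algebra_simps power2_eq_square)
    finally show "0 \<le> bil V A x x + 2 * bil V A x y * t + bil V A y y * t^2" .
  next
    show "0 \<le> bil V A y y" using assms(1) by (simp add: psd_bil)
  qed
  then show ?thesis .
qed

definition unitv :: "'a \<Rightarrow> 'a \<Rightarrow> real" where
  "unitv i = (\<lambda>j. if j = i then 1 else 0)"

lemma ip_unitv: "ip V (unitv i) x = x i" if "finite V" "i \<in> V"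
proof -
  have "ip V (unitv i) x = (\<Sum>n\<in>V. if n = i then x n else 0)"
    unfolding ip_def unitv_def by (intro sum.cong) auto
  also have "\<dots> = x i" using that by simp
  finally show ?thesis .
qed

lemma psd_qf0_ker:
  assumes "finite V" "psd V A" "symm V A" "bil V A x x = 0" "i \<in> V"
  shows "mv V A x i = 0"
proof -
  have "(bil V A (unitv i) x)^2 \<le> bil V A (unitv i) (unitv i) * bil V A x x"
    by (rule cauchy_schwarz_psd[OF assms(2,3)])
  then have "bil V A (unitv i) x = 0" using assms(4) by simp
  then show ?thesis using assms(1,5) by (simp add: bil_ip ip_unitv)
qed

definition kerV :: "'a set \<Rightarrow> ('a \<Rightarrow> 'a \<Rightarrow> real) \<Rightarrow> ('a \<Rightarrow> real) \<Rightarrow> bool" where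
  "kerV V A x \<longleftrightarrow> (\<forall>i\<in>V. mv V A x i = 0)"

lemma rank_one_bound:
  assumes "finite V" "psd V A" "symm V A"
    and h: "\<And>x. kerV V A x \<Longrightarrow> ip V r x = 0"
  shows "\<exists>C. \<forall>x. (ip V r x)^2 \<le> C * bil V A x x"
proof -
  have "\<exists>lm. \<forall>n\<in>V. r n = (\<Sum>e\<in>V. lm e * A e n)"
  proof (rule duality[OF assms(1) assms(1)])
    fix x assume "\<forall>e\<in>V. ip V (A e) x = 0"
    then have "kerV V A x" unfolding kerV_def mv_def ip_def by simp
    then show "ip V r x = 0" by (rule h)
  qed
  then obtain lm where lm: "\<forall>n\<in>V. r n = (\<Sum>e\<in>V. lm e * A e n)" by blast
  have eq: "ip V r x = bil V A lm x" for x
  proof -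
    have "ip V r x = ip V (\<lambda>n. \<Sum>e\<in>V. lm e * A e n) x"
      using lm by (intro ip_cong) auto
    also have "\<dots> = bil V A lm x"
      unfolding ip_def bil_def by (subst sum.swap) (simp add: sum_distrib_right sum_distrib_left mult_ac)
    finally show ?thesis .
  qed
  show ?thesis
    by (intro exI[of _ "bil V A lm lm"] allI, unfold eq, rule cauchy_schwarz_psd[OF assms(2,3)])
qed



lemma mv_sum: "mv V A (\<lambda>n. \<Sum>b\<in>B. c b * b n) i = (\<Sum>b\<in>B. c b * mv V A b i)"
  unfolding mv_def by (simp add: sum_distrib_left mult_ac sum.swap[of _ V B])

lemma kerV_sum: "\<forall>b\<in>B. kerV V A b \<Longrightarrow> kerV V A (\<lambda>n. \<Sum>b\<in>B. c b * b n)"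
  unfolding kerV_def by (simp add: mv_sum)

lemma qf_ker_shift:
  assumes "symm V M" "kerV V M k" "\<forall>n. x n = u n + k n"
  shows "bil V M x x = bil V M u u"
proof -
  have xe: "x = (\<lambda>n. u n + k n)" using assms(3) by auto
  have a: "bil V M w k = 0" for w
    using assms(2) unfolding bil_ip kerV_def ip_def by simp
  have b: "bil V M k w = 0" for w
    using a[of w] bil_sym[OF assms(1), of k w] by simp
  show ?thesis unfolding xe by (simp add: bil_add_left bil_add_right a b)
qed

lemma qf_norm_bound:
  assumes "finite V"
  shows "bil V S y y \<le> (\<Sum>i\<in>V. \<Sum>j\<in>V. \<bar>S i j\<bar>) * (\<Sum>i\<in>V. (y i)^2)"
proof -
  define X where "X = (\<Sum>i\<in>V. (y i)^2)"
  have yi: "(y i)^2 \<le> X" if "i \<in> V" for i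
    unfolding X_def using assms that by (intro member_le_sum) auto
  have trm: "y i * S i j * y j \<le> \<bar>S i j\<bar> * X" if "i \<in> V" "j \<in> V" for i j
  proof -
    have "y i * S i j * y j \<le> \<bar>y i * S i j * y j\<bar>" by simp
    also have "\<dots> = \<bar>S i j\<bar> * (\<bar>y i\<bar> * \<bar>y j\<bar>)" by (simp add: abs_mult mult_ac)
    finally have A: "y i * S i j * y j \<le> \<bar>S i j\<bar> * (\<bar>y i\<bar> * \<bar>y j\<bar>)" .
    have B: "\<bar>y i\<bar> * \<bar>y j\<bar> \<le> X"
    proof -
      have "0 \<le> (\<bar>y i\<bar> - \<bar>y j\<bar>)^2" by simp
      then have "2 * (\<bar>y i\<bar> * \<bar>y j\<bar>) \<le> (y i)^2 + (y j)^2"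
        by (simp add: power2_diff power2_abs)
      then show ?thesis using yi[OF that(1)] yi[OF that(2)] by simp
    qed
    show ?thesis using A mult_left_mono[OF B abs_ge_zero[of "S i j"]] by linarith
  qed
  have "bil V S y y \<le> (\<Sum>i\<in>V. \<Sum>j\<in>V. \<bar>S i j\<bar> * X)"
    unfolding bil_def by (intro sum_mono) (simp add: trm)
  also have "\<dots> = (\<Sum>i\<in>V. \<Sum>j\<in>V. \<bar>S i j\<bar>) * X"
    by (simp add: sum_distrib_right)
  finally show ?thesis unfolding X_def .
qed

lemma psd_bound:
  assumes fin: "finite V" and psdA: "psd V A" and sA: "symm V A" and sS: "symm V S" and fB: "finite B"
    and BK: "\<forall>b\<in>B. kerV V A b"
    and KB: "\<And>x. kerV V A x \<Longrightarrow> (\<exists>c. \<forall>i\<in>V. x i = (\<Sum>b\<in>B. c b * b i))"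
    and KS: "\<And>x. kerV V A x \<Longrightarrow> kerV V S x"
  shows "\<exists>C. \<forall>x. bil V S x x \<le> C * bil V A x x"
proof -
  have "\<forall>i\<in>V. \<exists>ep. (\<forall>b\<in>B. ip V ep b = 0) \<and> (\<exists>nu. \<forall>n. ep n = unitv i n - (\<Sum>b\<in>B. nu b * b n))"
  proof
    fix i assume "i \<in> V"
    obtain nu where "\<forall>b\<in>B. ip V (\<lambda>n. unitv i n - (\<Sum>e'\<in>B. nu e' * e' n)) b = 0"
      using proj_exists[OF fin fB, of "unitv i" "\<lambda>b. b"] by blast
    then show "\<exists>ep. (\<forall>b\<in>B. ip V ep b = 0) \<and> (\<exists>nu. \<forall>n. ep n = unitv i n - (\<Sum>b\<in>B. nu b * b n))"
      by blast
  qed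
  from bchoice[OF this] obtain ep where ep: "\<forall>i\<in>V. (\<forall>b\<in>B. ip V (ep i) b = 0) \<and> (\<exists>nu. \<forall>n. ep i n = unitv i n - (\<Sum>b\<in>B. nu b * b n))"
    by blast
  have "\<forall>i\<in>V. \<exists>C. \<forall>x. (ip V (ep i) x)^2 \<le> C * bil V A x x"
  proof
    fix i assume iV: "i \<in> V"
    show "\<exists>C. \<forall>x. (ip V (ep i) x)^2 \<le> C * bil V A x x"
    proof (rule rank_one_bound[OF fin psdA sA])
      fix z assume "kerV V A z"
      then obtain c where c: "\<forall>i\<in>V. z i = (\<Sum>b\<in>B. c b * b i)" using KB by blast
      have "ip V (ep i) z = ip V (ep i) (\<lambda>n. \<Sum>b\<in>B. c b * b n)"
        using c by (intro ip_cong) auto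
      also have "\<dots> = 0" using ep iV by (simp add: ip_sum_right)
      finally show "ip V (ep i) z = 0" .
    qed
  qed
  from bchoice[OF this] obtain Cf where Cf: "\<forall>i\<in>V. \<forall>x. (ip V (ep i) x)^2 \<le> Cf i * bil V A x x" by blast
  define nS where "nS = (\<Sum>i\<in>V. \<Sum>j\<in>V. \<bar>S i j\<bar>)"
  have nS0: "nS \<ge> 0" unfolding nS_def by (intro sum_nonneg) auto
  show ?thesis
  proof (intro exI[of _ "nS * (\<Sum>i\<in>V. Cf i)"] allI)
    fix x
    obtain lm where lm: "\<forall>b\<in>B. ip V (\<lambda>n. x n - (\<Sum>e'\<in>B. lm e' * e' n)) b = 0"
      using proj_exists[OF fin fB, of x "\<lambda>b. b"] by blast
    define k where "k = (\<lambda>n. \<Sum>e'\<in>B. lm e' * e' n)"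
    define x' where "x' = (\<lambda>n. x n - k n)"
    have x'B: "\<forall>b\<in>B. ip V x' b = 0" using lm unfolding x'_def k_def .
    have kA: "kerV V A k" unfolding k_def by (rule kerV_sum[OF BK])
    have kS: "kerV V S k" using KS[OF kA] .
    have qS: "bil V S x x = bil V S x' x'" by (rule qf_ker_shift[OF sS kS]) (simp add: x'_def)
    have qA: "bil V A x x = bil V A x' x'" by (rule qf_ker_shift[OF sA kA]) (simp add: x'_def)
    have comp: "x' i = ip V (ep i) x'" if "i \<in> V" for i
    proof -
      have "\<exists>nu. \<forall>n. ep i n = unitv i n - (\<Sum>b\<in>B. nu b * b n)" using ep that by simp
      then obtain nu where nu: "\<forall>n. ep i n = unitv i n - (\<Sum>b\<in>B. nu b * b n)" by (elim exE)
      have epe: "ep i = (\<lambda>n. unitv i n - (\<Sum>b\<in>B. nu b * b n))" using nu by (simp add: fun_eq_iff)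
      have "ip V (ep i) x' = ip V (\<lambda>n. unitv i n - (\<Sum>b\<in>B. nu b * b n)) x'"
        by (simp only: epe)
      also have "\<dots> = ip V (unitv i) x' - ip V (\<lambda>n. \<Sum>b\<in>B. nu b * b n) x'"
        by (rule ip_diff_left)
      also have "\<dots> = x' i"
      proof -
        have "ip V (\<lambda>n. \<Sum>b\<in>B. nu b * b n) x' = (\<Sum>b\<in>B. nu b * ip V b x')"
          using ip_sum_left[of V nu "\<lambda>b. b" B x'] by simp
        also have "\<dots> = 0" using x'B by (simp add: ip_comm)
        finally show ?thesis using ip_unitv[OF fin that] by simp
      qed
      finally show ?thesis by simp
    qed
    have "(\<Sum>i\<in>V. (x' i)^2) \<le> (\<Sum>i\<in>V. Cf i * bil V A x' x')"
    proof (rule sum_mono)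
      fix i assume iV: "i \<in> V"
      have "(x' i)^2 = (ip V (ep i) x')^2" by (subst comp[OF iV], rule refl)
      also have "\<dots> \<le> Cf i * bil V A x' x'" using Cf iV by blast
      finally show "(x' i)^2 \<le> Cf i * bil V A x' x'" .
    qed
    also have "\<dots> = (\<Sum>i\<in>V. Cf i) * bil V A x x" using qA by (simp add: sum_distrib_right)
    finally have X: "(\<Sum>i\<in>V. (x' i)^2) \<le> (\<Sum>i\<in>V. Cf i) * bil V A x x" .
    have "bil V S x x \<le> nS * (\<Sum>i\<in>V. (x' i)^2)"
      unfolding qS nS_def by (rule qf_norm_bound[OF fin])
    also have "\<dots> \<le> nS * ((\<Sum>i\<in>V. Cf i) * bil V A x x)"
      by (rule mult_left_mono[OF X nS0])
    finally show "bil V S x x \<le> nS * (\<Sum>i\<in>V. Cf i) * bil V A x x" by (simp add: mult.assoc)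
  qed
qed



global_interpretation fv: vector_space "\<lambda>(c::real) (f::'a \<Rightarrow> real). (\<lambda>x. c * f x)"
  by unfold_locales (auto simp: fun_eq_iff algebra_simps)

lemma fv_sum_apply: "(\<Sum>v\<in>A. (f v :: 'a \<Rightarrow> real)) x = (\<Sum>v\<in>A. f v x)"
  by (induction A rule: infinite_finite_induct) auto

lemma fv_span_finite_iff:
  assumes "finite B"
  shows "x \<in> fv.span B \<longleftrightarrow> (\<exists>c. x = (\<lambda>i. \<Sum>b\<in>B. c b * b i))"
  using fv.span_finite[OF assms] by (auto simp: fun_eq_iff fv_sum_apply)

lemma fv_independent_iff:
  assumes "finite B"
  shows "fv.independent B \<longleftrightarrow> (\<forall>c. (\<forall>i. (\<Sum>b\<in>B. c b * b i) = 0) \<longrightarrow> (\<forall>b\<in>B. c b = 0))"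
  using fv.dependent_finite[OF assms] by (auto simp: fun_eq_iff fv_sum_apply)



lemma fv_span_family:
  assumes "\<forall>k\<in>R. g k \<in> fv.span T"
  shows "(\<lambda>i. \<Sum>k\<in>R. beta k * g k i) \<in> fv.span T"
proof -
  have e: "(\<lambda>i. \<Sum>k\<in>R. beta k * g k i) = (\<Sum>k\<in>R. (\<lambda>i. beta k * g k i))"
    by (simp add: fun_eq_iff fv_sum_apply)
  show ?thesis unfolding e
    by (rule fv.span_sum) (use assms fv.span_scale in auto)
qed

lemma indep_in_span_spans:
  assumes fB: "finite B" and iG: "fv.independent G" and fG: "finite G"
    and c: "card G = card B" and sub: "G \<subseteq> fv.span B"
  shows "fv.span B \<subseteq> fv.span G"
proof
  fix x assume xB: "x \<in> fv.span B"
  show "x \<in> fv.span G"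
  proof (rule ccontr)
    assume nx: "x \<notin> fv.span G"
    have "fv.independent (insert x G)" by (rule fv.independent_insertI[OF nx iG])
    moreover have "insert x G \<subseteq> fv.span B" using sub xB by auto
    ultimately have "card (insert x G) \<le> card B" using fv.independent_span_bound[OF fB] by blast
    moreover have "x \<notin> G" using nx fv.span_base by blast
    ultimately show False using fG c by simp
  qed
qed

lemma family_spans:
  assumes fB: "finite B" and cB: "card B = m" and KB: "K \<subseteq> fv.span B"
    and gK: "\<forall>k<m. g k \<in> K"
    and ind: "\<And>al. (\<forall>i. (\<Sum>k<m. al k * g k i) = 0) \<Longrightarrow> (\<forall>k<m. al k = 0)"
    and xK: "x \<in> K"
  shows "\<exists>al. \<forall>i. x i = (\<Sum>k<m. al k * g k i)"
proof -
  have inj: "inj_on g {..<m}"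
  proof (rule inj_onI, rule ccontr)
    fix k l assume k: "k \<in> {..<m}" and l: "l \<in> {..<m}" and eq: "g k = g l" and ne: "k \<noteq> l"
    define al where "al = (\<lambda>j. if j = k then (1::real) else if j = l then -1 else 0)"
    have "(\<Sum>j<m. al j * g j i) = 0" for i
    proof -
      have "(\<Sum>j<m. al j * g j i) = (\<Sum>j\<in>{k,l}. al j * g j i)"
        by (rule sum.mono_neutral_right) (use k l in \<open>auto simp: al_def\<close>)
      also have "\<dots> = 0" using ne eq by (simp add: al_def)
      finally show ?thesis .
    qed
    then have "al k = 0" using ind k by blast
    then show False by (simp add: al_def)
  qed
  define G where "G = g ` {..<m}"
  have fG: "finite G" and cG: "card G = m" unfolding G_def using card_image[OF inj] by auto
  have iG: "fv.independent G"
    unfolding fv_independent_iff[OF fG]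
  proof (intro allI impI)
    fix c assume h: "\<forall>i. (\<Sum>b\<in>G. c b * b i) = 0"
    have "\<forall>i. (\<Sum>k<m. c (g k) * g k i) = 0"
      using h unfolding G_def by (simp add: sum.reindex[OF inj])
    then have "\<forall>k<m. c (g k) = 0" by (rule ind)
    then show "\<forall>b\<in>G. c b = 0" unfolding G_def by auto
  qed
  have "G \<subseteq> fv.span B" using gK KB unfolding G_def by auto
  then have "fv.span B \<subseteq> fv.span G" using indep_in_span_spans[OF fB iG fG] cG cB by simp
  then have "x \<in> fv.span G" using xK KB by auto
  then obtain c where "x = (\<lambda>i. \<Sum>b\<in>G. c b * b i)" using fv_span_finite_iff[OF fG] by blast
  then have "\<forall>i. x i = (\<Sum>k<m. c (g k) * g k i)" unfolding G_def by (simp add: sum.reindex[OF inj])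
  then show ?thesis by (intro exI[of _ "\<lambda>k. c (g k)"]) simp
qed

lemma unitv_independent:
  assumes "finite S"
  shows "fv.independent (unitv ` S)"
proof -
  have inj: "inj_on unitv S"
    proof (rule inj_onI)
    fix a b assume "unitv a = unitv b"
    then have "unitv a a = unitv b a" by simp
    then show "a = b" by (simp add: unitv_def split: if_splits)
  qed
  show ?thesis unfolding fv_independent_iff[OF finite_imageI[OF assms]]
  proof (intro allI impI ballI)
    fix c b assume h: "\<forall>i. (\<Sum>b\<in>unitv ` S. c b * b i) = 0" and b: "b \<in> unitv ` S"
    then obtain j where j: "j \<in> S" "b = unitv j" by auto
    have "(\<Sum>s\<in>S. c (unitv s) * unitv s j) = 0" using h by (simp add: sum.reindex[OF inj])
    moreover have "(\<Sum>s\<in>S. c (unitv s) * unitv s j) = (\<Sum>s\<in>S. if s = j then c (unitv s) else 0)"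
      by (intro sum.cong) (auto simp: unitv_def)
    moreover have "\<dots> = c (unitv j)" using j assms by simp
    ultimately show "c b = 0" using j by simp
  qed
qed

definition rho :: "('v \<Rightarrow> nat \<Rightarrow> real) \<Rightarrow> nat \<Rightarrow> 'v \<Rightarrow> real" where
  "rho p k i = (if k = 0 then 1 else p i (k - 1))"

lemma sum_rho: "(\<Sum>k<Suc d. al k * rho p k i) = al 0 + (\<Sum>k<d. al (Suc k) * p i k)"
  by (simp del: sum.lessThan_Suc add: sum.lessThan_Suc_shift rho_def)

lemma aff_transpose:
  assumes ai: "aff_indep d p S" and cS: "card S = Suc d"
    and h: "\<forall>i\<in>S. al 0 + (\<Sum>k<d. al (Suc k) * p i k) = 0"
  shows "\<forall>k<Suc d. al k = 0"
proof (rule ccontr)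
  assume "\<not> (\<forall>k<Suc d. al k = 0)"
  then obtain k0 where k0: "k0 < Suc d" "al k0 \<noteq> 0" by auto
  have fS: "finite S" using cS card.infinite by fastforce
  define r where "r = (\<lambda>k i. if i \<in> S then rho p k i else 0)"
  have ui: "unitv i \<in> fv.span (r ` {..<Suc d})" if iS: "i \<in> S" for i
  proof -
    have "\<exists>lm. \<forall>n\<in>S. unitv i n = (\<Sum>e\<in>{..<Suc d}. lm e * rho p e n)"
    proof (rule duality[OF fS finite_lessThan])
      fix x assume hx: "\<forall>e\<in>{..<Suc d}. ip S (rho p e) x = 0"
      have s0: "(\<Sum>j\<in>S. x j) = 0" using hx[rule_format, of 0] by (simp add: ip_def rho_def)
      have sk: "\<forall>k<d. (\<Sum>j\<in>S. x j * p j k) = 0"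
      proof (intro allI impI)
        fix k assume "k < d"
        then show "(\<Sum>j\<in>S. x j * p j k) = 0" using hx[rule_format, of "Suc k"]
          by (simp add: ip_def rho_def mult.commute)
      qed
      have "\<forall>j\<in>S. x j = 0" using ai s0 sk unfolding aff_indep_def by blast
      then show "ip S (unitv i) x = 0" using ip_unitv[OF fS iS] iS by simp
    qed
    then obtain lm where lm: "\<forall>n\<in>S. unitv i n = (\<Sum>e\<in>{..<Suc d}. lm e * rho p e n)" by blast
    have "unitv i = (\<lambda>n. \<Sum>e\<in>{..<Suc d}. lm e * r e n)"
      using lm iS by (auto simp: fun_eq_iff r_def unitv_def)
    also have "\<dots> \<in> fv.span (r ` {..<Suc d})"
      by (rule fv_span_family) (auto intro: fv.span_base)
    finally show ?thesis .
  qed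
  define R where "R = {..<Suc d} - {k0}"
  have rk0: "r k0 \<in> fv.span (r ` R)"
  proof -
    have rel: "\<forall>j. (\<Sum>k<Suc d. al k * r k j) = 0"
      using h by (simp add: r_def sum_rho[symmetric] if_distrib cong: if_cong)
    have "r k0 = (\<lambda>j. \<Sum>k\<in>R. (- al k / al k0) * r k j)"
    proof
      fix j
      have "(\<Sum>k<Suc d. al k * r k j) = al k0 * r k0 j + (\<Sum>k\<in>R. al k * r k j)"
        unfolding R_def using k0 sum.remove[of "{..<Suc d}" k0 "\<lambda>k. al k * r k j"] by (simp del: sum.lessThan_Suc)
      then have "al k0 * r k0 j = - (\<Sum>k\<in>R. al k * r k j)" using rel by simp
      then show "r k0 j = (\<Sum>k\<in>R. (- al k / al k0) * r k j)"
        using k0(2) by (simp add: field_simps sum_divide_distrib[symmetric] sum_negf)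
    qed
    also have "\<dots> \<in> fv.span (r ` R)"
      by (rule fv_span_family) (auto intro: fv.span_base)
    finally show ?thesis .
  qed
  have "r ` {..<Suc d} \<subseteq> fv.span (r ` R)"
  proof
    fix y assume "y \<in> r ` {..<Suc d}"
    then obtain k where k: "k < Suc d" "y = r k" by auto
    show "y \<in> fv.span (r ` R)"
    proof (cases "k = k0")
      case True then show ?thesis using rk0 k by simp
    next
      case False then have "k \<in> R" using k unfolding R_def by auto
      then have "r k \<in> r ` R" by blast
      then show ?thesis unfolding k(2) by (rule fv.span_base)
    qed
  qed
  then have "fv.span (r ` {..<Suc d}) \<subseteq> fv.span (r ` R)"
    using fv.span_minimal fv.subspace_span by blast
  then have "unitv ` S \<subseteq> fv.span (r ` R)" using ui by auto
  moreover have "finite (r ` R)" unfolding R_def by simp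
  ultimately have "card (unitv ` S) \<le> card (r ` R)"
    using fv.independent_span_bound[OF _ unitv_independent[OF fS]] by simp
  moreover have "card (unitv ` S) = Suc d"
  proof -
    have "inj_on unitv S" proof (rule inj_onI)
    fix a b assume "unitv a = unitv b"
    then have "unitv a a = unitv b a" by simp
    then show "a = b" by (simp add: unitv_def split: if_splits)
  qed
    then show ?thesis using cS card_image[of unitv S] by simp
  qed
  moreover have "card (r ` R) \<le> d"
  proof -
    have "card (r ` R) \<le> card R" by (rule card_image_le) (simp add: R_def)
    also have "card R = d" unfolding R_def using k0 by simp
    finally show ?thesis .
  qed
  ultimately show False by simp
qed



lemma family_indep:
  assumes fT: "finite T"
    and ind: "\<And>al. (\<forall>i. (\<Sum>k\<in>T. al k * g k i) = 0) \<Longrightarrow> (\<forall>k\<in>T. al k = 0)"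
  shows "inj_on g T" "fv.independent (g ` T)"
proof -
  show inj: "inj_on g T"
  proof (rule inj_onI, rule ccontr)
    fix k l assume k: "k \<in> T" and l: "l \<in> T" and eq: "g k = g l" and ne: "k \<noteq> l"
    define al where "al = (\<lambda>j. if j = k then (1::real) else if j = l then -1 else 0)"
    have "(\<Sum>j\<in>T. al j * g j i) = 0" for i
    proof -
      have "(\<Sum>j\<in>T. al j * g j i) = (\<Sum>j\<in>{k,l}. al j * g j i)"
        by (rule sum.mono_neutral_right) (use k l fT in \<open>auto simp: al_def\<close>)
      also have "\<dots> = 0" using ne eq by (simp add: al_def)
      finally show ?thesis .
    qed
    then have "al k = 0" using ind k by blast
    then show False by (simp add: al_def)
  qed
  show "fv.independent (g ` T)"
    unfolding fv_independent_iff[OF finite_imageI[OF fT]]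
  proof (intro allI impI)
    fix c assume h: "\<forall>i. (\<Sum>b\<in>g ` T. c b * b i) = 0"
    have "\<forall>i. (\<Sum>k\<in>T. c (g k) * g k i) = 0"
      using h by (simp add: sum.reindex[OF inj])
    then have "\<forall>k\<in>T. c (g k) = 0" by (rule ind)
    then show "\<forall>b\<in>g ` T. c b = 0" by auto
  qed
qed

lemma family_card_bound:
  assumes fT: "finite T"
    and ind: "\<And>al. (\<forall>i. (\<Sum>k\<in>T. al k * g k i) = 0) \<Longrightarrow> (\<forall>k\<in>T. al k = 0)"
    and fB: "finite B" and sp: "g ` T \<subseteq> fv.span B"
  shows "card T \<le> card B"
proof -
  have inj: "inj_on g T" using family_indep(1)[OF fT, of g] ind by blast
  have ii: "fv.independent (g ` T)" using family_indep(2)[OF fT, of g] ind by blast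
  have "card (g ` T) \<le> card B"
    using fv.independent_span_bound[OF fB ii sp] by simp
  then show ?thesis using card_image[OF inj] by simp
qed

lemma supported_in_span:
  assumes "finite S" "\<forall>j. j \<notin> S \<longrightarrow> f j = 0"
  shows "f \<in> fv.span (unitv ` S)"
proof -
  have "f = (\<lambda>j. \<Sum>i\<in>S. f i * unitv i j)"
  proof
    fix j
    have "(\<Sum>i\<in>S. f i * unitv i j) = (\<Sum>i\<in>S. if i = j then f i else 0)"
      by (intro sum.cong) (auto simp: unitv_def)
    also have "\<dots> = f j" using assms by auto
    finally show "f j = (\<Sum>i\<in>S. f i * unitv i j)" by simp
  qed
  also have "\<dots> \<in> fv.span (unitv ` S)"
    by (rule fv_span_family) (auto intro: fv.span_base)
  finally show ?thesis .
qed

lemma bad_finite: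
  assumes ai: "aff_indep d p S" and cS: "card S = Suc d"
  shows "finite {t. \<not> aff_indep d (\<lambda>i l. p i l + t * v i l) S}"
proof (rule ccontr)
  define Tb where "Tb = {t. \<not> aff_indep d (\<lambda>i l. p i l + t * v i l) S}"
  assume "infinite {t. \<not> aff_indep d (\<lambda>i l. p i l + t * v i l) S}"
  then have inf: "infinite Tb" unfolding Tb_def .
  have fS: "finite S" using cS card.infinite by fastforce
  have "\<forall>t\<in>Tb. \<exists>c. (\<Sum>i\<in>S. c i) = 0 \<and> (\<forall>k<d. (\<Sum>i\<in>S. c i * (p i k + t * v i k)) = 0) \<and> (\<exists>i\<in>S. c i \<noteq> 0)"
    unfolding Tb_def aff_indep_def by auto
  from bchoice[OF this] obtain c where c: "\<forall>t\<in>Tb. (\<Sum>i\<in>S. c t i) = 0 \<and> (\<forall>k<d. (\<Sum>i\<in>S. c t i * (p i k + t * v i k)) = 0) \<and> (\<exists>i\<in>S. c t i \<noteq> 0)"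
    by blast
  define ct where "ct = (\<lambda>t i. if i \<in> S then c t i else 0)"
  have t0: "0 \<notin> Tb" using ai unfolding Tb_def by simp
  have E0: "(\<Sum>i\<in>S. ct t i) = 0" if "t \<in> Tb" for t
    using c that unfolding ct_def by simp
  have Ek: "(\<Sum>i\<in>S. ct t i * p i k) = - t * (\<Sum>i\<in>S. ct t i * v i k)" if "t \<in> Tb" "k < d" for t k
  proof -
    have "(\<Sum>i\<in>S. c t i * (p i k + t * v i k)) = 0" using c that by blast
    then have "(\<Sum>i\<in>S. c t i * p i k) + t * (\<Sum>i\<in>S. c t i * v i k) = 0"
      by (simp add: algebra_simps sum.distrib sum_distrib_left)
    then show ?thesis unfolding ct_def by simp
  qed
  have claim: "\<forall>al. (\<forall>j. (\<Sum>t\<in>T. al t * ct t j) = 0) \<longrightarrow> (\<forall>t\<in>T. al t = 0)"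
    if "finite T" "T \<subseteq> Tb" for T
    using that
  proof (induction T rule: finite_induct)
    case empty then show ?case by simp
  next
    case (insert t0 T)
    show ?case
    proof (intro allI impI)
      fix al assume h: "\<forall>j. (\<Sum>t\<in>insert t0 T. al t * ct t j) = 0"
      have t0T: "t0 \<in> Tb" "T \<subseteq> Tb" using insert.prems by auto
      have nz: "t \<noteq> 0" if "t \<in> Tb" for t using t0 that by auto
      define be where "be = (\<lambda>t. al t * (1 / t0 - 1 / t))"
      define g where "g = (\<lambda>j. \<Sum>t\<in>T. be t * ct t j)"
      have hsum: "(\<Sum>t\<in>insert t0 T. al t * (\<Sum>i\<in>S. ct t i * w i)) = 0" for w
      proof -
        have "(\<Sum>t\<in>insert t0 T. al t * (\<Sum>i\<in>S. ct t i * w i)) = (\<Sum>i\<in>S. (\<Sum>t\<in>insert t0 T. al t * ct t i) * w i)"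
          by (simp add: sum_distrib_left sum_distrib_right mult_ac sum.swap[of _ "insert t0 T" S])
        also have "\<dots> = 0" using h by simp
        finally show ?thesis .
      qed
      have gS0: "(\<Sum>i\<in>S. g i) = 0"
      proof -
        have "(\<Sum>i\<in>S. g i) = (\<Sum>t\<in>T. be t * (\<Sum>i\<in>S. ct t i))"
          unfolding g_def by (simp add: sum_distrib_left sum.swap[of _ T S])
        also have "\<dots> = 0" by (intro sum.neutral) (use E0 t0T in auto)
        finally show ?thesis .
      qed
      have gSk: "(\<Sum>i\<in>S. g i * p i k) = 0" if "k < d" for k
      proof -
        have A: "(\<Sum>t\<in>insert t0 T. al t * (\<Sum>i\<in>S. ct t i * p i k)) = 0" by (rule hsum)
        have B: "(\<Sum>t\<in>insert t0 T. al t * (\<Sum>i\<in>S. ct t i * v i k)) = 0" by (rule hsum)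
        have B': "(\<Sum>t\<in>insert t0 T. al t * (1/t) * (\<Sum>i\<in>S. ct t i * p i k)) = 0"
        proof -
          have "(\<Sum>t\<in>insert t0 T. al t * (1/t) * (\<Sum>i\<in>S. ct t i * p i k))
              = (\<Sum>t\<in>insert t0 T. - (al t * (\<Sum>i\<in>S. ct t i * v i k)))"
          proof (rule sum.cong)
            fix t assume "t \<in> insert t0 T"
            then have tb: "t \<in> Tb" using t0T by auto
            show "al t * (1/t) * (\<Sum>i\<in>S. ct t i * p i k) = - (al t * (\<Sum>i\<in>S. ct t i * v i k))"
              using Ek[OF tb that] nz[OF tb] by (simp add: field_simps)
          qed simp
          also have "\<dots> = 0" using B by (simp add: sum_negf)
          finally show ?thesis .
        qed
        have "(\<Sum>t\<in>insert t0 T. be t * (\<Sum>i\<in>S. ct t i * p i k))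
            = (1/t0) * (\<Sum>t\<in>insert t0 T. al t * (\<Sum>i\<in>S. ct t i * p i k))
              - (\<Sum>t\<in>insert t0 T. al t * (1/t) * (\<Sum>i\<in>S. ct t i * p i k))"
        proof -
          define X where "X = (\<lambda>t. \<Sum>i\<in>S. ct t i * p i k)"
          have "(\<Sum>t\<in>insert t0 T. be t * X t) = (\<Sum>t\<in>insert t0 T. (1/t0) * (al t * X t) - al t * (1/t) * X t)"
            by (intro sum.cong) (simp_all add: be_def algebra_simps)
          also have "\<dots> = (1/t0) * (\<Sum>t\<in>insert t0 T. al t * X t) - (\<Sum>t\<in>insert t0 T. al t * (1/t) * X t)"
            by (simp only: sum_subtractf sum_distrib_left)
          finally show ?thesis unfolding X_def .
        qed
        also have "\<dots> = 0" using A B' by simp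
        finally have C: "(\<Sum>t\<in>insert t0 T. be t * (\<Sum>i\<in>S. ct t i * p i k)) = 0" .
        have "(\<Sum>t\<in>insert t0 T. be t * (\<Sum>i\<in>S. ct t i * p i k)) = (\<Sum>t\<in>T. be t * (\<Sum>i\<in>S. ct t i * p i k))"
          using insert.hyps by (simp add: be_def)
        then have "(\<Sum>t\<in>T. be t * (\<Sum>i\<in>S. ct t i * p i k)) = 0" using C by simp
        moreover have "(\<Sum>i\<in>S. g i * p i k) = (\<Sum>t\<in>T. be t * (\<Sum>i\<in>S. ct t i * p i k))"
          unfolding g_def by (simp add: sum_distrib_left sum_distrib_right mult_ac sum.swap[of _ T S])
        ultimately show ?thesis by simp
      qed
      have "\<forall>i\<in>S. g i = 0" using ai gS0 gSk unfolding aff_indep_def by blast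
      moreover have "\<forall>i. i \<notin> S \<longrightarrow> g i = 0" unfolding g_def ct_def by simp
      ultimately have "\<forall>j. (\<Sum>t\<in>T. be t * ct t j) = 0" unfolding g_def by metis
      then have beT: "\<forall>t\<in>T. be t = 0" using insert.IH t0T by blast
      have alT: "\<forall>t\<in>T. al t = 0"
      proof
        fix t assume tT: "t \<in> T"
        have "t \<noteq> t0" using tT insert.hyps by auto
        moreover have "t \<noteq> 0" "t0 \<noteq> 0" using nz t0T tT by auto
        ultimately have nz2: "1 / t0 - 1 / t \<noteq> 0" by (simp add: field_simps)
        have "al t * (1 / t0 - 1 / t) = 0" using beT tT unfolding be_def by blast
        with nz2 show "al t = 0" by (simp only: mult_eq_0_iff) blast
      qed
      have "\<forall>j. al t0 * ct t0 j = 0"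
      proof
        fix j
        have "(\<Sum>t\<in>insert t0 T. al t * ct t j) = al t0 * ct t0 j + (\<Sum>t\<in>T. al t * ct t j)"
          using insert.hyps by simp
        also have "(\<Sum>t\<in>T. al t * ct t j) = 0" using alT by simp
        finally show "al t0 * ct t0 j = 0" using h by simp
      qed
      moreover obtain i where "i \<in> S" "c t0 i \<noteq> 0" using c t0T by blast
      ultimately have "al t0 = 0" unfolding ct_def by (metis mult_eq_0_iff)
      then show "\<forall>t\<in>insert t0 T. al t = 0" using alT by simp
    qed
  qed
  obtain T where T: "T \<subseteq> Tb" "finite T" "card T = Suc (Suc d)"
    using infinite_arbitrarily_large[OF inf] by blast
  have "card T \<le> card (unitv ` S)"
  proof (rule family_card_bound[OF T(2)])
    show "\<And>al. \<forall>i. (\<Sum>k\<in>T. al k * ct k i) = 0 \<Longrightarrow> \<forall>k\<in>T. al k = 0"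
      using claim[OF T(2,1)] by blast
    show "finite (unitv ` S)" using fS by simp
    show "ct ` T \<subseteq> fv.span (unitv ` S)"
      using supported_in_span[OF fS] unfolding ct_def by auto
  qed
  also have "\<dots> \<le> card S" by (rule card_image_le[OF fS])
  finally show False using T cS by simp
qed

lemma gp_perturb:
  assumes fV: "finite V" and gp: "general_position d V p"
  shows "\<exists>t. t \<noteq> 0 \<and> general_position d V (\<lambda>i l. p i l + t * v i l)"
proof -
  define Bad where "Bad = (\<Union>S\<in>{S. S \<subseteq> V \<and> card S = d + 1}. {t. \<not> aff_indep d (\<lambda>i l. p i l + t * v i l) S})"
  have "finite Bad" unfolding Bad_def
  proof (rule finite_UN_I)
    show "finite {S. S \<subseteq> V \<and> card S = d + 1}" using fV by simp
    fix S assume "S \<in> {S. S \<subseteq> V \<and> card S = d + 1}"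
    then show "finite {t. \<not> aff_indep d (\<lambda>i l. p i l + t * v i l) S}"
      using bad_finite[of d p S v] gp unfolding general_position_def by auto
  qed
  then have "finite (insert 0 Bad)" by simp
  then obtain t :: real where "t \<notin> insert 0 Bad"
    using infinite_UNIV_char_0 by (metis ex_new_if_finite)
  then show ?thesis unfolding Bad_def general_position_def by auto
qed



lemma sq_diff_sum:
  fixes A B :: "nat \<Rightarrow> real"
  shows "(\<Sum>l<d. (A l - t * B l)^2) - (\<Sum>l<d. (A l + t * B l)^2) = - 4 * t * (\<Sum>l<d. A l * B l)"
proof -
  have "(\<Sum>l<d. (A l - t * B l)^2) - (\<Sum>l<d. (A l + t * B l)^2) = (\<Sum>l<d. (A l - t * B l)^2 - (A l + t * B l)^2)"
    by (simp add: sum_subtractf)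
  also have "\<dots> = (\<Sum>l<d. - 4 * t * (A l * B l))"
    by (intro sum.cong) (simp_all add: power2_eq_square algebra_simps)
  also have "\<dots> = - 4 * t * (\<Sum>l<d. A l * B l)" by (simp add: sum_distrib_left sum_negf)
  finally show ?thesis .
qed

lemma flex_preserves:
  assumes g: "graph V E" and ur: "univ_rigid_graph d V E" and gp: "general_position d V p"
    and fl: "\<forall>i\<in>V. \<forall>j\<in>V. {i,j} \<in> E \<longrightarrow> (\<Sum>l<d. (p i l - p j l) * (v i l - v j l)) = 0"
    and ab: "a \<in> V" "b \<in> V"
  shows "(\<Sum>l<d. (p a l - p b l) * (v a l - v b l)) = 0"
proof -
  have fV: "finite V" using g unfolding graph_def by simp
  obtain t where t: "t \<noteq> 0" "general_position d V (\<lambda>i l. p i l + t * v i l)"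
    using gp_perturb[OF fV gp] by blast
  define q where "q = (\<lambda>i l. p i l + t * v i l)"
  define q' where "q' = (\<lambda>i l. p i l - t * v i l)"
  have urf: "univ_rigid_framework d V E q" using ur t(2) unfolding univ_rigid_graph_def q_def by blast
  have key: "sqdist d q' i j - sqdist d q i j = - 4 * t * (\<Sum>l<d. (p i l - p j l) * (v i l - v j l))" for i j
  proof -
    have "sqdist d q' i j - sqdist d q i j
       = (\<Sum>l<d. ((p i l - p j l) - t * (v i l - v j l))^2) - (\<Sum>l<d. ((p i l - p j l) + t * (v i l - v j l))^2)"
      unfolding sqdist_def q_def q'_def by (simp add: algebra_simps)
    also have "\<dots> = - 4 * t * (\<Sum>l<d. (p i l - p j l) * (v i l - v j l))"
      by (rule sq_diff_sum)
    finally show ?thesis .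
  qed
  have "\<forall>i\<in>V. \<forall>j\<in>V. {i, j} \<in> E \<longrightarrow> sqdist d q' i j = sqdist d q i j"
  proof (intro ballI impI)
    fix i j assume "i \<in> V" "j \<in> V" "{i,j} \<in> E"
    then have "sqdist d q' i j - sqdist d q i j = 0" using fl key[of i j] by simp
    then show "sqdist d q' i j = sqdist d q i j" by simp
  qed
  then have "\<forall>i\<in>V. \<forall>j\<in>V. sqdist d q' i j = sqdist d q i j"
    using urf unfolding univ_rigid_framework_def by blast
  then have "sqdist d q' a b - sqdist d q a b = 0" using ab by simp
  then show ?thesis using key[of a b] t(1) by simp
qed

definition Rr :: "('v \<Rightarrow> nat \<Rightarrow> real) \<Rightarrow> 'v \<times> 'v \<Rightarrow> 'v \<times> nat \<Rightarrow> real" where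
  "Rr p e kl = (if fst kl = fst e then p (fst e) (snd kl) - p (snd e) (snd kl) else 0)
             + (if fst kl = snd e then p (snd e) (snd kl) - p (fst e) (snd kl) else 0)"

lemma ip_Rr:
  assumes "finite V" "i \<in> V" "j \<in> V"
  shows "ip (V \<times> {..<d}) (Rr p (i,j)) x = (\<Sum>l<d. (p i l - p j l) * (x (i,l) - x (j,l)))"
proof -
  have "ip (V \<times> {..<d}) (Rr p (i,j)) x = (\<Sum>k\<in>V. \<Sum>l<d. Rr p (i,j) (k,l) * x (k,l))"
    unfolding ip_def by (simp add: sum.cartesian_product)
  also have "\<dots> = (\<Sum>l<d. \<Sum>k\<in>V. Rr p (i,j) (k,l) * x (k,l))" by (rule sum.swap)
  also have "\<dots> = (\<Sum>l<d. (p i l - p j l) * (x (i,l) - x (j,l)))"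
  proof (rule sum.cong[OF refl])
    fix l
    have "(\<Sum>k\<in>V. Rr p (i,j) (k,l) * x (k,l))
        = (\<Sum>k\<in>V. (if k = i then (p i l - p j l) * x (i,l) else 0)) + (\<Sum>k\<in>V. (if k = j then (p j l - p i l) * x (j,l) else 0))"
      unfolding sum.distrib[symmetric] by (intro sum.cong refl) (auto simp: Rr_def algebra_simps)
    also have "\<dots> = (p i l - p j l) * (x (i,l) - x (j,l))" using assms by (simp add: algebra_simps)
    finally show "(\<Sum>k\<in>V. Rr p (i,j) (k,l) * x (k,l)) = (p i l - p j l) * (x (i,l) - x (j,l))" .
  qed
  finally show ?thesis .
qed

lemma sum_Rr:
  assumes "finite V" "i \<in> V"
  shows "(\<Sum>e\<in>V \<times> V. mu e * Rr p e (i,l)) = (\<Sum>j\<in>V. (mu (i,j) + mu (j,i)) * (p i l - p j l))"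
proof -
  have "(\<Sum>e\<in>V \<times> V. mu e * Rr p e (i,l)) = (\<Sum>a\<in>V. \<Sum>b\<in>V. mu (a,b) * Rr p (a,b) (i,l))"
    by (simp add: sum.cartesian_product)
  also have "\<dots> = (\<Sum>a\<in>V. \<Sum>b\<in>V. (if a = i then mu (i,b) * (p i l - p b l) else 0))
                 + (\<Sum>a\<in>V. \<Sum>b\<in>V. (if b = i then mu (a,i) * (p i l - p a l) else 0))"
    unfolding sum.distrib[symmetric] by (intro sum.cong refl) (auto simp: Rr_def algebra_simps)
  also have "\<dots> = (\<Sum>b\<in>V. mu (i,b) * (p i l - p b l)) + (\<Sum>a\<in>V. mu (a,i) * (p i l - p a l))"
  proof -
    have "(\<Sum>a\<in>V. \<Sum>b\<in>V. (if a = i then mu (i,b) * (p i l - p b l) else 0)) = (\<Sum>b\<in>V. mu (i,b) * (p i l - p b l))"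
    proof -
      have "(\<Sum>a\<in>V. \<Sum>b\<in>V. (if a = i then mu (i,b) * (p i l - p b l) else 0))
          = (\<Sum>a\<in>V. if a = i then (\<Sum>b\<in>V. mu (i,b) * (p i l - p b l)) else 0)"
        by (intro sum.cong refl) auto
      then show ?thesis using assms by simp
    qed
    moreover have "(\<Sum>a\<in>V. \<Sum>b\<in>V. (if b = i then mu (a,i) * (p i l - p a l) else 0)) = (\<Sum>a\<in>V. mu (a,i) * (p i l - p a l))"
      by (intro sum.cong refl) (use assms in simp)
    ultimately show ?thesis by simp
  qed
  also have "\<dots> = (\<Sum>j\<in>V. (mu (i,j) + mu (j,i)) * (p i l - p j l))"
    unfolding sum.distrib[symmetric] by (intro sum.cong refl) (simp add: algebra_simps)
  finally show ?thesis .
qed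



lemma stress_exists:
  assumes g: "graph V E" and ur: "univ_rigid_graph d V E" and gp: "general_position d V p"
    and FV: "\<forall>f\<in>F. f \<subseteq> V \<and> card f = 2" and FE: "F \<inter> E = {}"
    and bs: "\<forall>i\<in>V. \<forall>j\<in>V. be i j = be j i"
  shows "\<exists>S. stress_matrix d V (E \<union> F) p S \<and> (\<forall>i\<in>V. \<forall>j\<in>V. {i,j} \<in> F \<longrightarrow> S i j = be i j)"
proof -
  have fV: "finite V" using g unfolding graph_def by simp
  define N where "N = V \<times> {..<d}"
  define P where "P = {e\<in>V \<times> V. {fst e, snd e} \<in> E}"
  define Q where "Q = {e\<in>V \<times> V. {fst e, snd e} \<in> F}"
  define c where "c = (\<lambda>e. be (fst e) (snd e) / 2)"
  define w where "w = (\<lambda>n. \<Sum>e\<in>Q. c e * Rr p e n)"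
  have fN: "finite N" unfolding N_def using fV by simp
  have fP: "finite P" unfolding P_def using fV by simp
  have fQ: "finite Q" unfolding Q_def using fV by simp
  have "\<exists>lm. \<forall>n\<in>N. w n = (\<Sum>e\<in>P. lm e * Rr p e n)"
  proof (rule duality[OF fN fP])
    fix x assume hx: "\<forall>e\<in>P. ip N (Rr p e) x = 0"
    define v where "v = (\<lambda>i l. x (i,l))"
    have fl: "\<forall>i\<in>V. \<forall>j\<in>V. {i,j} \<in> E \<longrightarrow> (\<Sum>l<d. (p i l - p j l) * (v i l - v j l)) = 0"
    proof (intro ballI impI)
      fix i j assume ij: "i \<in> V" "j \<in> V" "{i,j} \<in> E"
      then have "(i,j) \<in> P" unfolding P_def by simp
      then have "ip N (Rr p (i,j)) x = 0" using hx by blast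
      then show "(\<Sum>l<d. (p i l - p j l) * (v i l - v j l)) = 0"
        unfolding N_def v_def using ip_Rr[OF fV ij(1,2)] by simp
    qed
    have "ip N (Rr p e) x = 0" if eQ: "e \<in> Q" for e
    proof -
      obtain a b where e: "e = (a,b)" "a \<in> V" "b \<in> V"
        using eQ unfolding Q_def by (cases e) auto
      have "(\<Sum>l<d. (p a l - p b l) * (v a l - v b l)) = 0"
        by (rule flex_preserves[OF g ur gp fl e(2,3)])
      then show ?thesis unfolding N_def e(1) using ip_Rr[OF fV e(2,3)] by (simp add: v_def)
    qed
    then show "ip N w x = 0" unfolding w_def by (simp add: ip_sum_left)
  qed
  then obtain lm where lm: "\<forall>n\<in>N. w n = (\<Sum>e\<in>P. lm e * Rr p e n)" by blast
  define mu where "mu = (\<lambda>e. (if e \<in> P then lm e else 0) - (if e \<in> Q then c e else 0))"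
  have Z: "(\<Sum>e\<in>V \<times> V. mu e * Rr p e (i,l)) = 0" if "i \<in> V" "l < d" for i l
  proof -
    have "(\<Sum>e\<in>V \<times> V. mu e * Rr p e (i,l))
        = (\<Sum>e\<in>V \<times> V. (if e \<in> P then lm e * Rr p e (i,l) else 0)) - (\<Sum>e\<in>V \<times> V. (if e \<in> Q then c e * Rr p e (i,l) else 0))"
      unfolding sum_subtractf[symmetric] by (intro sum.cong refl) (simp add: mu_def algebra_simps)
    also have "(\<Sum>e\<in>V \<times> V. (if e \<in> P then lm e * Rr p e (i,l) else 0)) = (\<Sum>e\<in>P. lm e * Rr p e (i,l))"
      unfolding P_def using fV by (simp add: sum.inter_filter)
    also have "(\<Sum>e\<in>V \<times> V. (if e \<in> Q then c e * Rr p e (i,l) else 0)) = (\<Sum>e\<in>Q. c e * Rr p e (i,l))"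
      unfolding Q_def using fV by (simp add: sum.inter_filter)
    also have "(\<Sum>e\<in>P. lm e * Rr p e (i,l)) = w (i,l)" using lm that unfolding N_def by simp
    also have "(\<Sum>e\<in>Q. c e * Rr p e (i,l)) = w (i,l)" unfolding w_def by simp
    finally show ?thesis by simp
  qed
  define om where "om = (\<lambda>i j. if i = j then 0 else - (mu (i,j) + mu (j,i)))"
  define S where "S = (\<lambda>i j. om i j - (if i = j then (\<Sum>j'\<in>V. om i j') else 0))"
  have omsym: "om i j = om j i" for i j unfolding om_def by simp
  have eqb: "(\<Sum>j\<in>V. (mu (i,j) + mu (j,i)) * (p i l - p j l)) = 0" if "i \<in> V" "l < d" for i l
    using Z[OF that] sum_Rr[OF fV that(1), of mu p l] by simp
  have st: "stress_matrix d V (E \<union> F) p S"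
    unfolding stress_matrix_def
  proof (intro conjI ballI allI impI)
    fix i j assume "i \<in> V" "j \<in> V"
    show "S i j = S j i" unfolding S_def using omsym by simp
  next
    fix i j assume ij: "i \<in> V" "j \<in> V" "i \<noteq> j \<and> {i, j} \<notin> E \<union> F"
    have "(i,j) \<notin> P" "(j,i) \<notin> P" "(i,j) \<notin> Q" "(j,i) \<notin> Q"
      using ij unfolding P_def Q_def by (auto simp: insert_commute)
    then show "S i j = 0" using ij unfolding S_def om_def mu_def by simp
  next
    fix i assume iV: "i \<in> V"
    show "(\<Sum>j\<in>V. S i j) = 0"
      unfolding S_def using iV fV by (simp add: sum_subtractf)
  next
    fix i k assume iV: "i \<in> V" and k: "k < d"
    have "(\<Sum>j\<in>V. S i j * p j k) = (\<Sum>j\<in>V. om i j * p j k) - (\<Sum>j\<in>V. om i j) * p i k"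
    proof -
      have "(\<Sum>j\<in>V. S i j * p j k) = (\<Sum>j\<in>V. om i j * p j k - (if i = j then (\<Sum>j'\<in>V. om i j') * p j k else 0))"
        unfolding S_def by (intro sum.cong refl) (simp add: algebra_simps)
      also have "\<dots> = (\<Sum>j\<in>V. om i j * p j k) - (\<Sum>j\<in>V. om i j) * p i k"
        using iV fV by (simp add: sum_subtractf)
      finally show ?thesis .
    qed
    also have "\<dots> = (\<Sum>j\<in>V. om i j * (p j k - p i k))"
      by (simp add: algebra_simps sum_subtractf sum_distrib_right sum_distrib_left)
    also have "\<dots> = (\<Sum>j\<in>V. (mu (i,j) + mu (j,i)) * (p i k - p j k))"
      unfolding om_def by (intro sum.cong refl) (auto simp: algebra_simps)
    also have "\<dots> = 0" by (rule eqb[OF iV k])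
    finally show "(\<Sum>j\<in>V. S i j * p j k) = 0" .
  qed
  have fv: "S i j = be i j" if ij: "i \<in> V" "j \<in> V" "{i,j} \<in> F" for i j
  proof -
    have "card {i,j} = 2" using FV ij by blast
    then have ne: "i \<noteq> j" by auto
    have "{i,j} \<notin> E" using FE ij by auto
    then have "(i,j) \<notin> P" "(j,i) \<notin> P" "(i,j) \<in> Q" "(j,i) \<in> Q"
      using ij unfolding P_def Q_def by (auto simp: insert_commute)
    then have "S i j = (be i j + be j i) / 2" using ne unfolding S_def om_def mu_def c_def by simp
    then show ?thesis using bs ij by simp
  qed
  show ?thesis using st fv by blast
qed



lemma sum_if_restrict:
  assumes "finite V" "A \<subseteq> V"
  shows "(\<Sum>j\<in>V. if j \<in> A then f j else 0) = sum f A"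
  using sum.inter_restrict[of V f A] assms by (simp add: Int_absorb1)

lemma bil_ext:
  assumes "finite V" "A \<subseteq> V"
  shows "bil V (\<lambda>i j. if i \<in> A \<and> j \<in> A then M i j else 0) x x = bil A M x x"
proof -
  have "bil V (\<lambda>i j. if i \<in> A \<and> j \<in> A then M i j else 0) x x
      = (\<Sum>i\<in>V. if i \<in> A then (\<Sum>j\<in>V. if j \<in> A then x i * M i j * x j else 0) else 0)"
    unfolding bil_def by (intro sum.cong refl) (auto intro!: sum.cong)
  also have "\<dots> = (\<Sum>i\<in>A. \<Sum>j\<in>A. x i * M i j * x j)"
  proof -
    have "(\<Sum>i\<in>V. if i \<in> A then (\<Sum>j\<in>V. if j \<in> A then x i * M i j * x j else 0) else 0)
        = (\<Sum>i\<in>A. (\<Sum>j\<in>V. if j \<in> A then x i * M i j * x j else 0))"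
      by (rule sum_if_restrict[OF assms])
    also have "\<dots> = (\<Sum>i\<in>A. \<Sum>j\<in>A. x i * M i j * x j)"
      by (intro sum.cong refl sum_if_restrict[OF assms])
    finally show ?thesis .
  qed
  finally show ?thesis unfolding bil_def .
qed

lemma bil_lin:
  "bil V (\<lambda>i j. a * M i j + N i j) x x = a * bil V M x x + bil V N x x"
  unfolding bil_def by (simp add: algebra_simps sum.distrib sum_distrib_left)

lemma bil_plus:
  "bil V (\<lambda>i j. M i j + N i j) x x = bil V M x x + bil V N x x"
  unfolding bil_def by (simp add: algebra_simps sum.distrib)

lemma bil_neg:
  "bil V (\<lambda>i j. - M i j) x x = - bil V M x x"
  unfolding bil_def by (simp add: sum_negf)

lemma aff_in_ker:
  assumes "stress_matrix d V E p M" "k < Suc d" "i \<in> V"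
  shows "(\<Sum>j\<in>V. M i j * rho p k j) = 0"
proof (cases k)
  case 0
  have "sum (M i) V = 0" using assms(1,3) unfolding stress_matrix_def by blast
  then show ?thesis using 0 by (simp add: rho_def)
next
  case (Suc l)
  then have "l < d" using assms(2) by simp
  then have "(\<Sum>j\<in>V. M i j * p j l) = 0" using assms(1,3) unfolding stress_matrix_def by blast
  then show ?thesis using Suc by (simp add: rho_def)
qed

lemma aff_in_kerV:
  assumes "stress_matrix d V E p M"
  shows "kerV V M (\<lambda>i. \<Sum>k<Suc d. al k * rho p k i)"
  unfolding kerV_def mv_def
proof
  fix i assume iV: "i \<in> V"
  have "(\<Sum>j\<in>V. M i j * (\<Sum>k<Suc d. al k * rho p k j)) = (\<Sum>k<Suc d. al k * (\<Sum>j\<in>V. M i j * rho p k j))"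
    by (simp del: sum.lessThan_Suc add: sum_distrib_left mult_ac sum.swap[of _ V "{..<Suc d}"])
  also have "\<dots> = 0" using aff_in_ker[OF assms _ iV] by simp
  finally show "(\<Sum>j\<in>V. M i j * (\<Sum>k<Suc d. al k * rho p k j)) = 0" .
qed

lemma kerV_restrict:
  "kerV V M x \<Longrightarrow> (\<lambda>i. if i \<in> V then x i else 0) \<in> matrix_kernel V M"
  unfolding kerV_def matrix_kernel_def mv_def by (simp cong: sum.cong)

lemma kernel_affine:
  assumes st: "stress_matrix d V E p M" and hn: "has_nullity V M (Suc d)"
    and S0: "S0 \<subseteq> V" "aff_indep d p S0" "card S0 = Suc d"
    and kx: "kerV V M x"
  shows "\<exists>al. \<forall>i\<in>V. x i = (\<Sum>k<Suc d. al k * rho p k i)"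
proof -
  obtain B where B: "finite B" "card B = Suc d" "B \<subseteq> matrix_kernel V M"
    "\<forall>x\<in>matrix_kernel V M. \<exists>c. x = (\<lambda>i. \<Sum>b\<in>B. c b * b i)"
    using hn unfolding has_nullity_def by blast
  define g where "g = (\<lambda>k i. if i \<in> V then rho p k i else 0)"
  have "\<exists>al. \<forall>i. (\<lambda>i. if i \<in> V then x i else 0) i = (\<Sum>k<Suc d. al k * g k i)"
  proof (rule family_spans[OF B(1) B(2)])
    show "matrix_kernel V M \<subseteq> fv.span B"
      using B(4) fv_span_finite_iff[OF B(1)] by blast
    show "\<forall>k<Suc d. g k \<in> matrix_kernel V M"
      using aff_in_ker[OF st] unfolding matrix_kernel_def g_def by (simp cong: sum.cong)
    show "\<forall>k<Suc d. al k = 0" if "\<forall>i. (\<Sum>k<Suc d. al k * g k i) = 0" for al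
    proof (rule aff_transpose[OF S0(2,3)])
      show "\<forall>i\<in>S0. al 0 + (\<Sum>k<d. al (Suc k) * p i k) = 0"
      proof
        fix i assume "i \<in> S0"
        then have iV: "i \<in> V" using S0(1) by auto
        have "(\<Sum>k<Suc d. al k * g k i) = 0" using that by blast
        moreover have "(\<Sum>k<Suc d. al k * g k i) = (\<Sum>k<Suc d. al k * rho p k i)"
          using iV unfolding g_def by simp
        ultimately show "al 0 + (\<Sum>k<d. al (Suc k) * p i k) = 0" using sum_rho[of al p i d] by simp
      qed
    qed
    show "(\<lambda>i. if i \<in> V then x i else 0) \<in> matrix_kernel V M" by (rule kerV_restrict[OF kx])
  qed
  then obtain al where "\<forall>i. (if i \<in> V then x i else 0) = (\<Sum>k<Suc d. al k * g k i)" by auto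
  then have "\<forall>i\<in>V. x i = (\<Sum>k<Suc d. al k * rho p k i)"
  proof (intro ballI)
    fix i assume iV: "i \<in> V" and h: "\<forall>i. (if i \<in> V then x i else 0) = (\<Sum>k<Suc d. al k * g k i)"
    have "(if i \<in> V then x i else 0) = (\<Sum>k<Suc d. al k * g k i)" using h by blast
    then show "x i = (\<Sum>k<Suc d. al k * rho p k i)" using iV unfolding g_def by (simp del: sum.lessThan_Suc)
  qed
  then show ?thesis by blast
qed



lemma rho_cong: "p i = q i \<Longrightarrow> rho p k i = rho q k i"
  by (simp add: rho_def)

lemma stress_symm: "stress_matrix d V E p M \<Longrightarrow> symm V M"
  unfolding stress_matrix_def symm_def by blast

lemma nullity_basis:
  assumes "has_nullity V M n"
  obtains B where "finite B" "\<forall>b\<in>B. kerV V M b"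
    "\<And>x. kerV V M x \<Longrightarrow> \<exists>c. \<forall>i\<in>V. x i = (\<Sum>b\<in>B. c b * b i)"
proof -
  obtain B where B: "finite B" "B \<subseteq> matrix_kernel V M"
    "\<forall>x\<in>matrix_kernel V M. \<exists>c. x = (\<lambda>i. \<Sum>b\<in>B. c b * b i)"
    using assms unfolding has_nullity_def by blast
  have "\<forall>b\<in>B. kerV V M b" using B(2) unfolding matrix_kernel_def kerV_def mv_def by auto
  moreover have "\<exists>c. \<forall>i\<in>V. x i = (\<Sum>b\<in>B. c b * b i)" if kx: "kerV V M x" for x
  proof -
    obtain c where "(\<lambda>i. if i \<in> V then x i else 0) = (\<lambda>i. \<Sum>b\<in>B. c b * b i)"
      using B(3) kerV_restrict[OF kx] by blast
    then have "\<forall>i\<in>V. x i = (\<Sum>b\<in>B. c b * b i)" by (metis (mono_tags, lifting))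
    then show ?thesis by blast
  qed
  ultimately show ?thesis using that B(1) by blast
qed

lemma kerV_stress_apply:
  assumes st: "stress_matrix d V E p M" and xa: "\<forall>i\<in>V. x i = (\<Sum>k<Suc d. al k * rho p k i)"
  shows "kerV V M x"
proof -
  have "kerV V M (\<lambda>i. \<Sum>k<Suc d. al k * rho p k i)" by (rule aff_in_kerV[OF st])
  then show ?thesis unfolding kerV_def mv_def using xa by (simp cong: sum.cong del: sum.lessThan_Suc)
qed



theorem theorem8:
  fixes d :: nat
    and VA VB :: "'v set" and EA EB :: "'v set set"
    and pA pB :: "'v \<Rightarrow> nat \<Rightarrow> real"
  assumes "d \<ge> 1"
    and "graph VA EA" and "graph VB EB"
    and "univ_rigid_graph d VA EA" and "univ_rigid_graph d VB EB"
    and "general_position d VA pA" and "general_position d VB pB"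
    and "VA \<inter> VB \<subset> VA" and "VA \<inter> VB \<subset> VB"
    and "card (VA \<inter> VB) \<ge> d + 1"
    and "\<forall>i\<in>VA \<inter> VB. pA i = pB i"
    and "has_psd_stress_nullity d VA EA pA (d + 1)"
    and "has_psd_stress_nullity d VB EB pB (d + 1)"
  shows "has_psd_stress_nullity d (VA \<union> VB)
           ((EA \<union> EB) - {e \<in> EB - EA. e \<subseteq> VA \<inter> VB})
           (\<lambda>i. if i \<in> VA then pA i else pB i) (d + 1)"
proof -
  note gA = assms(2) and gB = assms(3) and urA = assms(4) and gpA = assms(6) and gpB = assms(7)
  note pAB = assms(11)
  have fA: "finite VA" using gA unfolding graph_def by simp
  have fB: "finite VB" using gB unfolding graph_def by simp
  define V where "V = VA \<union> VB"
  define F where "F = {e \<in> EB - EA. e \<subseteq> VA \<inter> VB}"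
  define H where "H = (EA \<union> EB) - F"
  define p where "p = (\<lambda>i. if i \<in> VA then pA i else pB i)"
  have fV: "finite V" unfolding V_def using fA fB by simp
  obtain S0 where S0: "S0 \<subseteq> VA \<inter> VB" "card S0 = Suc d" "finite S0"
    using obtain_subset_with_card_n[of "Suc d" "VA \<inter> VB"] assms(10) by auto
  have aiA: "aff_indep d pA S0" using gpA S0 unfolding general_position_def by auto
  have aiB: "aff_indep d pB S0" using gpB S0 unfolding general_position_def by auto
  obtain MA where stA: "stress_matrix d VA EA pA MA" and psdA: "psd VA MA" and nA: "has_nullity VA MA (Suc d)"
    using assms(12) unfolding has_psd_stress_nullity_def by auto
  obtain MB where stB: "stress_matrix d VB EB pB MB" and psdB: "psd VB MB" and nB: "has_nullity VB MB (Suc d)"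
    using assms(13) unfolding has_psd_stress_nullity_def by auto
  have sA: "symm VA MA" by (rule stress_symm[OF stA])
  have sB: "symm VB MB" by (rule stress_symm[OF stB])
  have kerA_aff: "\<exists>al. \<forall>i\<in>VA. x i = (\<Sum>k<Suc d. al k * rho pA k i)" if "kerV VA MA x" for x
    by (rule kernel_affine[OF stA nA _ aiA S0(2) that]) (use S0 in auto)
  have kerB_aff: "\<exists>al. \<forall>i\<in>VB. x i = (\<Sum>k<Suc d. al k * rho pB k i)" if "kerV VB MB x" for x
    by (rule kernel_affine[OF stB nB _ aiB S0(2) that]) (use S0 in auto)
  \<comment> \<open>the correcting stress on G_A\<close>
  define be where "be = (\<lambda>i j. if i \<in> VB \<and> j \<in> VB then - MB i j else 0)"
  have FV: "\<forall>f\<in>F. f \<subseteq> VA \<and> card f = 2" using gB unfolding F_def graph_def by auto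
  have FE: "F \<inter> EA = {}" unfolding F_def by auto
  have bs: "\<forall>i\<in>VA. \<forall>j\<in>VA. be i j = be j i" using sB unfolding be_def symm_def by auto
  obtain S where stS: "stress_matrix d VA (EA \<union> F) pA S"
    and Sval: "\<forall>i\<in>VA. \<forall>j\<in>VA. {i,j} \<in> F \<longrightarrow> S i j = be i j"
    using stress_exists[OF gA urA gpA FV FE bs] by blast
  have sS: "symm VA S" by (rule stress_symm[OF stS])
  define Sn where "Sn = (\<lambda>i j. - S i j)"
  have sSn: "symm VA Sn" using sS unfolding Sn_def symm_def by simp
  obtain BA where BA: "finite BA" "\<forall>b\<in>BA. kerV VA MA b"
    "\<And>x. kerV VA MA x \<Longrightarrow> \<exists>c. \<forall>i\<in>VA. x i = (\<Sum>b\<in>BA. c b * b i)"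
    using nullity_basis[OF nA] by blast
  have KSn: "kerV VA Sn x" if kx: "kerV VA MA x" for x
  proof -
    obtain al where "\<forall>i\<in>VA. x i = (\<Sum>k<Suc d. al k * rho pA k i)" using kerA_aff[OF kx] by blast
    then have "kerV VA S x" by (rule kerV_stress_apply[OF stS])
    then show ?thesis unfolding kerV_def mv_def Sn_def by (simp add: sum_negf)
  qed
  have psdA': "psd VA MA" by (rule psdA)
  obtain C where C: "\<forall>x. bil VA Sn x x \<le> C * bil VA MA x x"
    using psd_bound[OF fA psdA sA sSn BA(1) BA(2) BA(3) KSn] by blast
  define c0 where "c0 = max C 0 + 1"
  define MA' where "MA' = (\<lambda>i j. c0 * MA i j + S i j)"
  have qA0: "bil VA MA x x \<ge> 0" for x using psdA by (simp add: psd_bil)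
  have qA': "bil VA MA x x \<le> bil VA MA' x x" for x
  proof -
    have "bil VA Sn x x = - bil VA S x x" unfolding Sn_def by (rule bil_neg)
    then have "- bil VA S x x \<le> C * bil VA MA x x" using C[rule_format, of x] by simp
    moreover have "C * bil VA MA x x \<le> max C 0 * bil VA MA x x"
      using qA0[of x] by (intro mult_right_mono) auto
    ultimately have "bil VA MA x x \<le> c0 * bil VA MA x x + bil VA S x x"
      unfolding c0_def by (simp add: algebra_simps)
    then show ?thesis unfolding MA'_def by (simp add: bil_lin)
  qed
  have psdA'': "psd VA MA'" unfolding psd_bil using qA' qA0 by (meson order_trans)
  have sA': "symm VA MA'" using sA sS unfolding MA'_def symm_def by simp
  define M where "M = (\<lambda>i j. (if i \<in> VA \<and> j \<in> VA then MA' i j else 0) + (if i \<in> VB \<and> j \<in> VB then MB i j else 0))"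
  have qM: "bil V M x x = bil VA MA' x x + bil VB MB x x" for x
  proof -
    have "bil V M x x = bil V (\<lambda>i j. if i \<in> VA \<and> j \<in> VA then MA' i j else 0) x x
                      + bil V (\<lambda>i j. if i \<in> VB \<and> j \<in> VB then MB i j else 0) x x"
      unfolding M_def by (rule bil_plus)
    also have "\<dots> = bil VA MA' x x + bil VB MB x x"
      using bil_ext[OF fV, of VA MA' x] bil_ext[OF fV, of VB MB x] unfolding V_def by simp
    finally show ?thesis .
  qed
  have qB0: "bil VB MB x x \<ge> 0" for x using psdB by (simp add: psd_bil)
  have psdM: "psd V M" unfolding psd_bil qM using psdA'' qB0 by (simp add: psd_bil add_nonneg_nonneg)
  have VAV: "VA \<subseteq> V" and VBV: "VB \<subseteq> V" unfolding V_def by auto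
  have stM: "stress_matrix d V H p M"
    unfolding stress_matrix_def
  proof (intro conjI ballI allI impI)
    fix i j assume "i \<in> V" "j \<in> V"
    show "M i j = M j i" using sA sS sB unfolding M_def MA'_def symm_def by auto
  next
    fix i j assume ij: "i \<in> V" "j \<in> V" "i \<noteq> j \<and> {i, j} \<notin> H"
    show "M i j = 0"
    proof (cases "{i,j} \<in> F")
      case True
      then have ijC: "i \<in> VA" "j \<in> VA" "i \<in> VB" "j \<in> VB" "{i,j} \<notin> EA" unfolding F_def by auto
      have "MA i j = 0" using stA ijC ij unfolding stress_matrix_def by blast
      moreover have "S i j = - MB i j" using Sval ijC True unfolding be_def by auto
      ultimately show ?thesis using ijC unfolding M_def MA'_def by simp
    next
      case False
      then have nE: "{i,j} \<notin> EA" "{i,j} \<notin> EB" using ij unfolding H_def by auto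
      have a: "MA' i j = 0" if "i \<in> VA" "j \<in> VA"
      proof -
        have "MA i j = 0" using stA that nE ij unfolding stress_matrix_def by blast
        moreover have "S i j = 0" using stS that nE ij False unfolding stress_matrix_def by blast
        ultimately show ?thesis unfolding MA'_def by simp
      qed
      have b: "MB i j = 0" if "i \<in> VB" "j \<in> VB"
        using stB that nE ij unfolding stress_matrix_def by blast
      show ?thesis unfolding M_def using a b by simp
    qed
  next
    fix i assume iV: "i \<in> V"
    have "(\<Sum>j\<in>V. M i j) = (\<Sum>j\<in>V. (if j \<in> VA then (if i \<in> VA then MA' i j else 0) else 0)
                                   + (if j \<in> VB then (if i \<in> VB then MB i j else 0) else 0))"
      unfolding M_def by (intro sum.cong refl) auto
    also have "\<dots> = (\<Sum>j\<in>VA. (if i \<in> VA then MA' i j else 0)) + (\<Sum>j\<in>VB. (if i \<in> VB then MB i j else 0))"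
      by (simp only: sum.distrib sum_if_restrict[OF fV VAV] sum_if_restrict[OF fV VBV])
    also have "\<dots> = 0"
    proof -
      have "(\<Sum>j\<in>VA. MA' i j) = 0" if "i \<in> VA"
      proof -
        have "(\<Sum>j\<in>VA. MA i j) = 0" "(\<Sum>j\<in>VA. S i j) = 0"
          using stA stS that unfolding stress_matrix_def by blast+
        then show ?thesis unfolding MA'_def by (simp add: sum.distrib sum_distrib_left[symmetric])
      qed
      moreover have "(\<Sum>j\<in>VB. MB i j) = 0" if "i \<in> VB"
        using stB that unfolding stress_matrix_def by blast
      ultimately show ?thesis by (cases "i \<in> VA"; cases "i \<in> VB"; simp)
    qed
    finally show "(\<Sum>j\<in>V. M i j) = 0" .
  next
    fix i k assume iV: "i \<in> V" and k: "k < d"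
    have "(\<Sum>j\<in>V. M i j * p j k) = (\<Sum>j\<in>V. (if j \<in> VA then (if i \<in> VA then MA' i j * pA j k else 0) else 0)
                                   + (if j \<in> VB then (if i \<in> VB then MB i j * pB j k else 0) else 0))"
      unfolding M_def p_def using pAB by (intro sum.cong refl) (auto simp: algebra_simps)
    also have "\<dots> = (\<Sum>j\<in>VA. (if i \<in> VA then MA' i j * pA j k else 0)) + (\<Sum>j\<in>VB. (if i \<in> VB then MB i j * pB j k else 0))"
      by (simp only: sum.distrib sum_if_restrict[OF fV VAV] sum_if_restrict[OF fV VBV])
    also have "\<dots> = 0"
    proof -
      have "(\<Sum>j\<in>VA. MA' i j * pA j k) = 0" if "i \<in> VA"
      proof -
        have "(\<Sum>j\<in>VA. MA i j * pA j k) = 0" "(\<Sum>j\<in>VA. S i j * pA j k) = 0"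
          using stA stS that k unfolding stress_matrix_def by blast+
        then show ?thesis unfolding MA'_def
          by (simp add: algebra_simps sum.distrib sum_distrib_left[symmetric])
      qed
      moreover have "(\<Sum>j\<in>VB. MB i j * pB j k) = 0" if "i \<in> VB"
        using stB that k unfolding stress_matrix_def by blast
      ultimately show ?thesis by (cases "i \<in> VA"; cases "i \<in> VB"; simp)
    qed
    finally show "(\<Sum>j\<in>V. M i j * p j k) = 0" .
  qed
  have nM: "has_nullity V M (Suc d)"
  proof -
    define g where "g = (\<lambda>k i. if i \<in> V then rho p k i else 0)"
    have rA: "rho p k i = rho pA k i" if "i \<in> VA" for k i
      by (rule rho_cong) (simp add: p_def that)
    have rB: "rho p k i = rho pB k i" if "i \<in> VB" for k i
      by (rule rho_cong) (use pAB that in \<open>simp add: p_def\<close>)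
    have indg: "\<forall>k\<in>{..<Suc d}. al k = 0" if h: "\<forall>i. (\<Sum>k\<in>{..<Suc d}. al k * g k i) = 0" for al
    proof -
      have "\<forall>k<Suc d. al k = 0"
      proof (rule aff_transpose[OF aiA S0(2)])
        show "\<forall>i\<in>S0. al 0 + (\<Sum>k<d. al (Suc k) * pA i k) = 0"
        proof
          fix i assume iS: "i \<in> S0"
          then have iA: "i \<in> VA" and iV: "i \<in> V" using S0(1) unfolding V_def by auto
          have "(\<Sum>k<Suc d. al k * g k i) = 0" using h by blast
          moreover have "(\<Sum>k<Suc d. al k * g k i) = (\<Sum>k<Suc d. al k * rho pA k i)"
            by (intro sum.cong refl) (simp add: g_def iV rA[OF iA])
          ultimately show "al 0 + (\<Sum>k<d. al (Suc k) * pA i k) = 0" using sum_rho[of al pA i d] by simp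
        qed
      qed
      then show ?thesis by simp
    qed
    have inj: "inj_on g {..<Suc d}" using family_indep(1)[OF finite_lessThan, of g] indg by blast
    have ind: "fv.independent (g ` {..<Suc d})" using family_indep(2)[OF finite_lessThan, of g] indg by blast
    define G where "G = g ` {..<Suc d}"
    have fG: "finite G" unfolding G_def by simp
    have cG: "card G = Suc d" unfolding G_def using card_image[OF inj] by simp
    have GK: "G \<subseteq> matrix_kernel V M"
    proof
      fix y assume "y \<in> G"
      then obtain k where k: "k < Suc d" "y = g k" unfolding G_def by auto
      have "(\<Sum>j\<in>V. M i j * g k j) = 0" if iV: "i \<in> V" for i
      proof -
        have "(\<Sum>j\<in>V. M i j * g k j) = (\<Sum>j\<in>V. M i j * rho p k j)"
          by (intro sum.cong refl) (simp add: g_def)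
        also have "\<dots> = 0" by (rule aff_in_ker[OF stM k(1) iV])
        finally show ?thesis .
      qed
      then show "y \<in> matrix_kernel V M" unfolding matrix_kernel_def k(2) by (simp add: g_def)
    qed
    have li: "lin_indep_fun G" unfolding lin_indep_fun_def
      using ind fv_independent_iff[OF fG] unfolding G_def by blast
    have sp: "\<exists>c. x = (\<lambda>i. \<Sum>b\<in>G. c b * b i)" if xK: "x \<in> matrix_kernel V M" for x
    proof -
      have x0: "\<And>i. i \<notin> V \<Longrightarrow> x i = 0" and kM: "kerV V M x"
        using xK unfolding matrix_kernel_def kerV_def mv_def by auto
      have "bil V M x x = 0" using kM unfolding bil_ip kerV_def ip_def by simp
      then have s0: "bil VA MA' x x + bil VB MB x x = 0" using qM by simp
      have "bil VA MA' x x \<ge> 0" using psdA'' by (simp add: psd_bil)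
      then have zA': "bil VA MA' x x = 0" and zB: "bil VB MB x x = 0" using s0 qB0[of x] by linarith+
      have zA: "bil VA MA x x = 0" using qA'[of x] qA0[of x] zA' by linarith
      have kA: "kerV VA MA x" unfolding kerV_def using psd_qf0_ker[OF fA psdA sA zA] by blast
      have kB: "kerV VB MB x" unfolding kerV_def using psd_qf0_ker[OF fB psdB sB zB] by blast
      obtain al where al: "\<forall>i\<in>VA. x i = (\<Sum>k<Suc d. al k * rho pA k i)" using kerA_aff[OF kA] by blast
      obtain bt where bt: "\<forall>i\<in>VB. x i = (\<Sum>k<Suc d. bt k * rho pB k i)" using kerB_aff[OF kB] by blast
      have ab: "\<forall>k<Suc d. (\<lambda>k. al k - bt k) k = 0"
      proof (rule aff_transpose[OF aiA S0(2)])
        show "\<forall>i\<in>S0. (\<lambda>k. al k - bt k) 0 + (\<Sum>k<d. (\<lambda>k. al k - bt k) (Suc k) * pA i k) = 0"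
        proof
          fix i assume iS: "i \<in> S0"
          then have iA: "i \<in> VA" and iB: "i \<in> VB" using S0(1) by auto
          have "(\<Sum>k<Suc d. bt k * rho pB k i) = (\<Sum>k<Suc d. bt k * rho pA k i)"
          proof (intro sum.cong refl)
            fix k
            have "pB i = pA i" using pAB iA iB by simp
            then show "bt k * rho pB k i = bt k * rho pA k i" using rho_cong[of pB i pA k] by simp
          qed
          then have "(\<Sum>k<Suc d. al k * rho pA k i) - (\<Sum>k<Suc d. bt k * rho pA k i) = 0"
            using al iA bt iB by (metis diff_self)
          then have "(\<Sum>k<Suc d. (al k - bt k) * rho pA k i) = 0"
            by (simp del: sum.lessThan_Suc add: sum_subtractf algebra_simps)
          then show "(\<lambda>k. al k - bt k) 0 + (\<Sum>k<d. (\<lambda>k. al k - bt k) (Suc k) * pA i k) = 0"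
            using sum_rho[of "\<lambda>k. al k - bt k" pA i d] by simp
        qed
      qed
      have xg: "x i = (\<Sum>k<Suc d. al k * g k i)" for i
      proof (cases "i \<in> VA")
        case True
        then have "i \<in> V" unfolding V_def by simp
        then show ?thesis using al True by (simp del: sum.lessThan_Suc add: g_def rA)
      next
        case nA: False
        show ?thesis
        proof (cases "i \<in> VB")
          case True
          then have iV: "i \<in> V" unfolding V_def by simp
          have "x i = (\<Sum>k<Suc d. bt k * rho pB k i)" using bt True by blast
          also have "\<dots> = (\<Sum>k<Suc d. al k * g k i)"
            using ab by (intro sum.cong refl) (simp add: g_def iV rB[OF True])
          finally show ?thesis .
        next
          case False
          then have "i \<notin> V" using nA unfolding V_def by simp
          then show ?thesis using x0 by (simp add: g_def)
        qed
      qed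
      define c where "c = (\<lambda>b. al (the_inv_into {..<Suc d} g b))"
      have "x = (\<lambda>i. \<Sum>b\<in>G. c b * b i)"
      proof
        fix i
        have "(\<Sum>b\<in>G. c b * b i) = (\<Sum>k<Suc d. c (g k) * g k i)"
          unfolding G_def by (simp del: sum.lessThan_Suc add: sum.reindex[OF inj])
        also have "\<dots> = (\<Sum>k<Suc d. al k * g k i)"
          by (intro sum.cong refl) (simp add: c_def the_inv_into_f_f[OF inj])
        finally show "x i = (\<Sum>b\<in>G. c b * b i)" using xg by simp
      qed
      then show ?thesis by blast
    qed
    show ?thesis unfolding has_nullity_def using fG cG GK li sp by blast
  qed
  show ?thesis
    unfolding has_psd_stress_nullity_def using stM psdM nM
    unfolding V_def H_def F_def p_def by auto
qed


end
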